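(* Fix $L>0$. There exists $C>0$ such that for all $u^0\in H^6(0,L)$ with $u^0,Pu^0,P^2u^0\in\mathrm{Dom}(P)$, all $\delta t\in(0,1)$ and $J\ge2$ with $\delta t/\delta x^2\le1/2$, and all $n\ge1$, $$\Big\|\delta t\sum_{k=0}^{n-1}(\mathrm{Id}+\delta t\,\mathsf P_\delta)^{n-1-k}\mathcal L_\delta u(k\delta t,\cdot)\Big\|_{\ell^2}\le C\,\delta x\sum_{p=1}^\infty|\alpha_p|p^4,$$ where $u$ is the solution of $\partial_tu=Pu$, $u(0)=u^0$.
   Context: $P=\partial_x^2$ with homogeneous Neumann conditions on $(0,L)$, $\mathrm{Dom}(P)=\{u\in L^2:\partial_x^2u\in L^2,\ \partial_xu(0)=\partial_xu(L)=0\}$; $c_0=1$, $c_p(x)=\sqrt2\cos(p\pi x/L)$, $\alpha_p=\frac1L\int_0^Lu^0c_p\,dx$, $u(t)=\sum_{p\ge0}\alpha_pe^{-p^2\pi^2t/L^2}c_p$. For $J\ge2$: $\delta x=L/(J-1)$, $x_j=j\delta x$, $\|\mathsf v\|_{\ell^2}^2=\frac1J\sum_j\mathsf v_j^2$, $\Pi_{\delta x}w=(w(x_j))_{0\le j\le J-1}$, $\mathsf P_\delta=\frac1{\delta x^2}\times$ the tridiagonal $J\times J$ matrix with diagonal $(-1,-2,\dots,-2,-1)$ and off-diagonals $1$. For smooth $w$, $\mathcal L_\delta w=\Pi_{\delta x}(\partial_x^2w)-\mathsf P_\delta\Pi_{\delta x}w$. *)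

theory Defs
  imports "HOL-Analysis.Analysis"
begin

text \<open>Sobolev space H^6(0,L) in one dimension: f (its continuous representative)
  has successive derivatives g 1, ..., g 5 that are absolutely continuous
  (indefinite integrals of the next one) and the 6th derivative g 6 lies in L^2(0,L).
  g k is the k-th (weak) derivative of f on [0,L].\<close>
definition H6_derivs :: "real \<Rightarrow> (real \<Rightarrow> real) \<Rightarrow> (nat \<Rightarrow> real \<Rightarrow> real) \<Rightarrow> bool" where
  "H6_derivs L f g \<longleftrightarrow>
     (\<forall>x\<in>{0..L}. g 0 x = f x) \<and>
     (\<forall>k<6. \<forall>x\<in>{0..L}. (g (Suc k) has_integral (g k x - g k 0)) {0..x}) \<and>
     (\<lambda>x. (g 6 x)\<^sup>2) integrable_on {0..L}"

text \<open>u0 in H^6(0,L) with u0, P u0, P^2 u0 in Dom(P) (homogeneous Neumann conditions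
  on u0, u0'' and u0'''').\<close>
definition admissible_data :: "real \<Rightarrow> (real \<Rightarrow> real) \<Rightarrow> bool" where
  "admissible_data L u0 \<longleftrightarrow>
     (\<exists>g. H6_derivs L u0 g \<and>
          g 1 0 = 0 \<and> g 1 L = 0 \<and>
          g 3 0 = 0 \<and> g 3 L = 0 \<and>
          g 5 0 = 0 \<and> g 5 L = 0)"

definition cfun :: "real \<Rightarrow> nat \<Rightarrow> real \<Rightarrow> real" where
  "cfun L p x = (if p = 0 then 1 else sqrt 2 * cos (real p * pi * x / L))"

definition alpha :: "real \<Rightarrow> (real \<Rightarrow> real) \<Rightarrow> nat \<Rightarrow> real" where
  "alpha L u0 p = (1 / L) * integral {0..L} (\<lambda>x. u0 x * cfun L p x)"

definition sol :: "real \<Rightarrow> (real \<Rightarrow> real) \<Rightarrow> real \<Rightarrow> real \<Rightarrow> real" where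
  "sol L u0 t x = (\<Sum>p. alpha L u0 p * exp (- (real p)\<^sup>2 * pi\<^sup>2 * t / L\<^sup>2) * cfun L p x)"

definition dx :: "real \<Rightarrow> nat \<Rightarrow> real" where
  "dx L J = L / (real J - 1)"

text \<open>Grid vectors are functions nat \<Rightarrow> real, only indices 0..J-1 matter.\<close>
definition l2norm :: "nat \<Rightarrow> (nat \<Rightarrow> real) \<Rightarrow> real" where
  "l2norm J v = sqrt ((1 / real J) * (\<Sum>j<J. (v j)\<^sup>2))"

definition Pi_grid :: "real \<Rightarrow> nat \<Rightarrow> (real \<Rightarrow> real) \<Rightarrow> nat \<Rightarrow> real" where
  "Pi_grid L J w = (\<lambda>j. w (real j * dx L J))"

definition Pdelta :: "real \<Rightarrow> nat \<Rightarrow> (nat \<Rightarrow> real) \<Rightarrow> nat \<Rightarrow> real" where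
  "Pdelta L J v = (\<lambda>j. (1 / (dx L J)\<^sup>2) *
      ((if j = 0 \<or> j = J - 1 then -1 else -2) * v j
       + (if j > 0 then v (j - 1) else 0)
       + (if j + 1 < J then v (j + 1) else 0)))"

definition scheme_op :: "real \<Rightarrow> nat \<Rightarrow> real \<Rightarrow> (nat \<Rightarrow> real) \<Rightarrow> nat \<Rightarrow> real" where
  "scheme_op L J dt v = (\<lambda>j. v j + dt * Pdelta L J v j)"

definition Ldelta :: "real \<Rightarrow> nat \<Rightarrow> (real \<Rightarrow> real) \<Rightarrow> nat \<Rightarrow> real" where
  "Ldelta L J w = (\<lambda>j. Pi_grid L J (deriv (deriv w)) j - Pdelta L J (Pi_grid L J w) j)"

end

theory Submission
  imports Defs
begin


lemma scheme_op_expand: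
  "scheme_op L J dt x j = x j + dt / (dx L J)\<^sup>2 *
     ((if j = 0 \<or> j = J - 1 then -1 else -2) * x j
      + (if 0 < j then 1 else 0) * x (j - 1) + (if j + 1 < J then 1 else 0) * x (j + 1))"
  unfolding scheme_op_def Pdelta_def by (simp add: field_simps)

lemma scheme_op_lin:
  "scheme_op L J dt (\<lambda>i. a * v i + b * w i) = (\<lambda>j. a * scheme_op L J dt v j + b * scheme_op L J dt w j)"
  unfolding scheme_op_expand by (rule ext) (simp add: algebra_simps)

lemma iter_lin:
  "(scheme_op L J dt ^^ m) (\<lambda>i. a * v i + b * w i) = (\<lambda>j. a * (scheme_op L J dt ^^ m) v j + b * (scheme_op L J dt ^^ m) w j)"
  by (induction m) (simp_all add: scheme_op_lin)

lemma iter_scale: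
  "(scheme_op L J dt ^^ m) (\<lambda>i. a * v i) = (\<lambda>j. a * (scheme_op L J dt ^^ m) v j)"
  using iter_lin[where a=a and v=v and b=0 and w=v] by simp

lemma iter_add:
  "(scheme_op L J dt ^^ m) (\<lambda>i. v i + w i) = (\<lambda>j. (scheme_op L J dt ^^ m) v j + (scheme_op L J dt ^^ m) w j)"
  using iter_lin[where a=1 and v=v and b=1 and w=w] by simp

lemma iter_diff:
  "(scheme_op L J dt ^^ m) (\<lambda>i. v i - w i) = (\<lambda>j. (scheme_op L J dt ^^ m) v j - (scheme_op L J dt ^^ m) w j)"
  using iter_lin[where a=1 and v=v and b="-1" and w=w] by simp

lemma iter_local:
  assumes "\<forall>i<J. v i = w i" "j < J"
  shows "(scheme_op L J dt ^^ m) v j = (scheme_op L J dt ^^ m) w j"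
  using assms(2)
proof (induction m arbitrary: j)
  case 0 then show ?case using assms(1) by simp
next
  case (Suc m)
  have a: "(scheme_op L J dt ^^ m) v j = (scheme_op L J dt ^^ m) w j" using Suc by blast
  have b: "0 < j \<Longrightarrow> (scheme_op L J dt ^^ m) v (j-1) = (scheme_op L J dt ^^ m) w (j-1)"
    using Suc by simp
  have c: "j + 1 < J \<Longrightarrow> (scheme_op L J dt ^^ m) v (j+1) = (scheme_op L J dt ^^ m) w (j+1)"
    using Suc by simp
  have e1: "(scheme_op L J dt ^^ Suc m) v j = scheme_op L J dt ((scheme_op L J dt ^^ m) v) j" by simp
  have e2: "(scheme_op L J dt ^^ Suc m) w j = scheme_op L J dt ((scheme_op L J dt ^^ m) w) j" by simp
  show ?case unfolding e1 e2 scheme_op_expand[of L J dt "(scheme_op L J dt ^^ m) v"]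
      scheme_op_expand[of L J dt "(scheme_op L J dt ^^ m) w"] using a b c by simp
qed

lemma scheme_op_sums:
  assumes "\<And>j. (\<lambda>p. f p j) sums F j"
  shows "(\<lambda>p. scheme_op L J dt (f p) j) sums scheme_op L J dt F j"
  unfolding scheme_op_expand
  by (intro sums_add sums_mult assms)

lemma iter_sums:
  assumes "\<And>j. (\<lambda>p. f p j) sums F j"
  shows "(\<lambda>p. (scheme_op L J dt ^^ m) (f p) j) sums (scheme_op L J dt ^^ m) F j"
proof (induction m arbitrary: j)
  case 0 then show ?case using assms by simp
next
  case (Suc m)
  show ?case using scheme_op_sums[of "\<lambda>p. (scheme_op L J dt ^^ m) (f p)", OF Suc] by simp
qed

lemma l2norm_L2: "l2norm J v = sqrt (1 / real J) * L2_set v {..<J}"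
  unfolding l2norm_def L2_set_def by (simp add: real_sqrt_divide)

lemma l2norm_nonneg: "0 \<le> l2norm J v"
  unfolding l2norm_def by (intro real_sqrt_ge_zero mult_nonneg_nonneg sum_nonneg) auto

lemma l2norm_cong:
  assumes "\<And>j. j < J \<Longrightarrow> v j = w j"
  shows "l2norm J v = l2norm J w"
proof -
  have "(\<Sum>j<J. (v j)\<^sup>2) = (\<Sum>j<J. (w j)\<^sup>2)" by (rule sum.cong) (auto simp: assms)
  then show ?thesis unfolding l2norm_def by simp
qed

lemma l2norm_add: "l2norm J (\<lambda>j. v j + w j) \<le> l2norm J v + l2norm J w"
proof -
  have "0 \<le> sqrt (1 / real J)" by simp
  from mult_left_mono[OF L2_set_triangle_ineq[of v w "{..<J}"] this]
  show ?thesis unfolding l2norm_L2 by (simp add: distrib_left)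
qed

lemma l2norm_scale: "l2norm J (\<lambda>j. c * v j) = \<bar>c\<bar> * l2norm J v"
proof -
  have "(\<Sum>j<J. (c * v j)\<^sup>2) = c\<^sup>2 * (\<Sum>j<J. (v j)\<^sup>2)"
    by (simp add: sum_distrib_left power_mult_distrib)
  then have "(1 / real J) * (\<Sum>j<J. (c * v j)\<^sup>2) = c\<^sup>2 * ((1 / real J) * (\<Sum>j<J. (v j)\<^sup>2))"
    by simp
  then show ?thesis unfolding l2norm_def
    by (simp only: real_sqrt_mult real_sqrt_abs)
qed

lemma l2norm_minus: "l2norm J (\<lambda>j. - v j) = l2norm J v"
  using l2norm_scale[of J "-1" v] by simp

lemma l2norm_diff: "l2norm J (\<lambda>j. v j - w j) \<le> l2norm J v + l2norm J w"
  using l2norm_add[of J v "\<lambda>j. - w j"] l2norm_minus[of J w] by simp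

lemma l2norm_sum:
  assumes "finite K"
  shows "l2norm J (\<lambda>j. \<Sum>k\<in>K. f k j) \<le> (\<Sum>k\<in>K. l2norm J (f k))"
  using assms
proof (induction K rule: finite_induct)
  case empty then show ?case by (simp add: l2norm_def)
next
  case (insert x F)
  have "l2norm J (\<lambda>j. \<Sum>k\<in>insert x F. f k j) = l2norm J (\<lambda>j. f x j + (\<Sum>k\<in>F. f k j))"
    using insert by simp
  also have "\<dots> \<le> l2norm J (f x) + l2norm J (\<lambda>j. \<Sum>k\<in>F. f k j)"
    by (rule l2norm_add)
  also have "\<dots> \<le> l2norm J (f x) + (\<Sum>k\<in>F. l2norm J (f k))" using insert by simp
  finally show ?case using insert by simp
qed

lemma l2norm_le_const:
  assumes "0 < J" "\<And>j. j < J \<Longrightarrow> \<bar>v j\<bar> \<le> M"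
  shows "l2norm J v \<le> M"
proof -
  have M: "0 \<le> M" using assms(2)[of 0] assms(1) by linarith
  have "(\<Sum>j<J. (v j)\<^sup>2) \<le> (\<Sum>j<J. M\<^sup>2)"
  proof (intro sum_mono)
    fix j assume "j \<in> {..<J}"
    then have "\<bar>v j\<bar> \<le> M" using assms(2) by simp
    then have "\<bar>v j\<bar>\<^sup>2 \<le> M\<^sup>2" by (intro power_mono) auto
    then show "(v j)\<^sup>2 \<le> M\<^sup>2" by simp
  qed
  then have "(1 / real J) * (\<Sum>j<J. (v j)\<^sup>2) \<le> M\<^sup>2"
    using assms(1) by (simp add: field_simps)
  then have "sqrt ((1 / real J) * (\<Sum>j<J. (v j)\<^sup>2)) \<le> sqrt (M\<^sup>2)"
    by (rule real_sqrt_le_mono)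
  then show ?thesis unfolding l2norm_def using M by simp
qed

lemma jensen3:
  fixes w0 w1 w2 a b c :: real
  assumes "0 \<le> w0" "0 \<le> w1" "0 \<le> w2" "w0 + w1 + w2 = 1"
  shows "(w0 * a + w1 * b + w2 * c)\<^sup>2 \<le> w0 * a\<^sup>2 + w1 * b\<^sup>2 + w2 * c\<^sup>2"
proof -
  have w0: "w0 = 1 - w1 - w2" using assms(4) by simp
  have "w0 * a\<^sup>2 + w1 * b\<^sup>2 + w2 * c\<^sup>2 - (w0 * a + w1 * b + w2 * c)\<^sup>2
        = w0 * w1 * (a - b)\<^sup>2 + w0 * w2 * (a - c)\<^sup>2 + w1 * w2 * (b - c)\<^sup>2"
    unfolding w0 by (simp add: power2_eq_square algebra_simps)
  moreover have "0 \<le> w0 * w1 * (a - b)\<^sup>2 + w0 * w2 * (a - c)\<^sup>2 + w1 * w2 * (b - c)\<^sup>2"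
    using assms by (intro add_nonneg_nonneg mult_nonneg_nonneg zero_le_power2) 
  ultimately show ?thesis by linarith
qed

lemma scheme_op_contr_sq:
  assumes J: "2 \<le> J" and r0: "0 \<le> dt / (dx L J)\<^sup>2" and r1: "dt / (dx L J)\<^sup>2 \<le> 1 / 2"
  shows "(\<Sum>j<J. (scheme_op L J dt x j)\<^sup>2) \<le> (\<Sum>j<J. (x j)\<^sup>2)"
proof -
  define r where "r = dt / (dx L J)\<^sup>2"
  define al :: "nat \<Rightarrow> real" where "al j = (if 0 < j then 1 else 0)" for j
  define be :: "nat \<Rightarrow> real" where "be j = (if j + 1 < J then 1 else 0)" for j
  have rr: "0 \<le> r" "r \<le> 1/2" using r0 r1 r_def by auto
  have eq: "scheme_op L J dt x j = (1 - r * al j - r * be j) * x j + (r * al j) * x (j - 1) + (r * be j) * x (j + 1)"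
    if "j < J" for j
  proof -
    have co: "(if j = 0 \<or> j = J - 1 then -1 else -2) = - al j - be j"
      using that J unfolding al_def be_def by auto
    show ?thesis unfolding scheme_op_expand co
      unfolding r_def al_def be_def by (simp add: algebra_simps)
  qed
  have b: "(scheme_op L J dt x j)\<^sup>2 \<le> (x j)\<^sup>2 + r * (al j * ((x (j - 1))\<^sup>2 - (x j)\<^sup>2)) + r * (be j * ((x (j + 1))\<^sup>2 - (x j)\<^sup>2))"
    if "j < J" for j
  proof -
    have "(scheme_op L J dt x j)\<^sup>2 \<le> (1 - r * al j - r * be j) * (x j)\<^sup>2 + (r * al j) * (x (j - 1))\<^sup>2 + (r * be j) * (x (j + 1))\<^sup>2"
      unfolding eq[OF that]
      using rr by (intro jensen3) (auto simp: al_def be_def)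
    then show ?thesis by (simp add: algebra_simps)
  qed
  obtain M where M: "J = Suc M" using J by (cases J) auto
  have s1: "(\<Sum>j<J. al j * ((x (j - 1))\<^sup>2 - (x j)\<^sup>2)) = (\<Sum>j<M. (x j)\<^sup>2 - (x (Suc j))\<^sup>2)"
    unfolding M sum.lessThan_Suc_shift by (simp add: al_def)
  have s2: "(\<Sum>j<J. be j * ((x (j + 1))\<^sup>2 - (x j)\<^sup>2)) = (\<Sum>j<M. (x (Suc j))\<^sup>2 - (x j)\<^sup>2)"
    unfolding M sum.lessThan_Suc by (auto simp: be_def M intro!: sum.cong)
  have "(\<Sum>j<J. (scheme_op L J dt x j)\<^sup>2) \<le> (\<Sum>j<J. (x j)\<^sup>2 + r * (al j * ((x (j - 1))\<^sup>2 - (x j)\<^sup>2)) + r * (be j * ((x (j + 1))\<^sup>2 - (x j)\<^sup>2)))"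
    by (intro sum_mono b) auto
  also have "\<dots> = (\<Sum>j<J. (x j)\<^sup>2) + r * (\<Sum>j<J. al j * ((x (j - 1))\<^sup>2 - (x j)\<^sup>2)) + r * (\<Sum>j<J. be j * ((x (j + 1))\<^sup>2 - (x j)\<^sup>2))"
    by (simp add: sum.distrib sum_distrib_left)
  also have "\<dots> = (\<Sum>j<J. (x j)\<^sup>2)"
    unfolding s1 s2 by (simp add: sum_subtractf right_diff_distrib)
  finally show ?thesis .
qed

lemma scheme_op_contr:
  assumes J: "2 \<le> J" and "0 \<le> dt" and r1: "dt / (dx L J)\<^sup>2 \<le> 1 / 2"
  shows "l2norm J (scheme_op L J dt x) \<le> l2norm J x"
proof -
  have "0 \<le> dt / (dx L J)\<^sup>2" using assms(2) by simp
  from scheme_op_contr_sq[OF J this r1, of x]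
  show ?thesis unfolding l2norm_def
    by (intro real_sqrt_le_mono mult_left_mono) auto
qed

lemma iter_contr:
  assumes J: "2 \<le> J" and "0 \<le> dt" and r1: "dt / (dx L J)\<^sup>2 \<le> 1 / 2"
  shows "l2norm J ((scheme_op L J dt ^^ m) x) \<le> l2norm J x"
proof (induction m)
  case 0 then show ?case by simp
next
  case (Suc m)
  then show ?case using scheme_op_contr[OF assms, of "(scheme_op L J dt ^^ m) x"] by simp
qed


lemma abel_id:
  fixes c :: "nat \<Rightarrow> real" and X :: "nat \<Rightarrow> nat \<Rightarrow> real"
  shows "(\<Sum>m<Suc n. c m * (X (Suc m) j - X m j)) =
     c n * X (Suc n) j - c 0 * X 0 j - (\<Sum>m<n. (c (Suc m) - c m) * X (Suc m) j)"
proof (induction n)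
  case 0 then show ?case by (simp add: right_diff_distrib)
next
  case (Suc n)
  have "(\<Sum>m<Suc (Suc n). c m * (X (Suc m) j - X m j)) = (\<Sum>m<Suc n. c m * (X (Suc m) j - X m j)) + c (Suc n) * (X (Suc (Suc n)) j - X (Suc n) j)"
    by (rule sum.lessThan_Suc)
  also have "\<dots> = c n * X (Suc n) j - c 0 * X 0 j - (\<Sum>m<n. (c (Suc m) - c m) * X (Suc m) j) + c (Suc n) * (X (Suc (Suc n)) j - X (Suc n) j)"
    by (simp only: Suc.IH)
  also have "(\<Sum>m<Suc n. (c (Suc m) - c m) * X (Suc m) j) = (\<Sum>m<n. (c (Suc m) - c m) * X (Suc m) j) + (c (Suc n) - c n) * X (Suc n) j"
    by (rule sum.lessThan_Suc)
  ultimately show ?case by (simp add: left_diff_distrib right_diff_distrib)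
qed
lemma abel_bound:
  fixes c :: "nat \<Rightarrow> real"
  assumes X: "\<And>m. l2norm J (X m) \<le> M" and c0: "0 \<le> c 0" and cm: "\<And>m. c m \<le> c (Suc m)"
  shows "l2norm J (\<lambda>j. \<Sum>m<Suc n. c m * (X (Suc m) j - X m j)) \<le> 2 * c n * M"
proof -
  have M: "0 \<le> M" using X[of 0] l2norm_nonneg[of J "X 0"] by linarith
  have mono: "c 0 \<le> c n" using cm by (simp add: lift_Suc_mono_le)
  have "l2norm J (\<lambda>j. \<Sum>m<Suc n. c m * (X (Suc m) j - X m j)) =
        l2norm J (\<lambda>j. (c n * X (Suc n) j - c 0 * X 0 j) - (\<Sum>m<n. (c (Suc m) - c m) * X (Suc m) j))"
    by (simp only: abel_id)
  also have "\<dots> \<le> l2norm J (\<lambda>j. c n * X (Suc n) j - c 0 * X 0 j) + l2norm J (\<lambda>j. \<Sum>m<n. (c (Suc m) - c m) * X (Suc m) j)"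
    by (rule l2norm_diff)
  also have "\<dots> \<le> (l2norm J (\<lambda>j. c n * X (Suc n) j) + l2norm J (\<lambda>j. c 0 * X 0 j)) + (\<Sum>m<n. l2norm J (\<lambda>j. (c (Suc m) - c m) * X (Suc m) j))"
    by (intro add_mono l2norm_diff l2norm_sum) auto
  also have "\<dots> = (c n * l2norm J (X (Suc n)) + c 0 * l2norm J (X 0)) + (\<Sum>m<n. (c (Suc m) - c m) * l2norm J (X (Suc m)))"
    using c0 mono cm by (simp add: l2norm_scale)
  also have "\<dots> \<le> (c n * M + c 0 * M) + (\<Sum>m<n. (c (Suc m) - c m) * M)"
    using c0 mono cm X by (intro add_mono sum_mono mult_left_mono) auto
  also have "(\<Sum>m<n. (c (Suc m) - c m) * M) = (c n - c 0) * M"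
    by (simp add: sum_distrib_right[symmetric] sum_lessThan_telescope)
  finally show ?thesis by (simp add: algebra_simps)
qed

lemma cos_diff_le: fixes a b :: real shows "\<bar>cos a - cos b\<bar> \<le> \<bar>a - b\<bar>"
proof -
  have "\<bar>cos a - cos b\<bar> = 2 * \<bar>sin ((a + b) / 2)\<bar> * \<bar>sin ((b - a) / 2)\<bar>"
    by (simp add: cos_diff_cos abs_mult)
  also have "\<dots> \<le> 2 * 1 * \<bar>(b - a) / 2\<bar>"
    by (intro mult_mono abs_sin_x_le_abs_x) auto
  finally show ?thesis by simp
qed

lemma one_minus_cos_le: fixes u :: real shows "1 - cos u \<le> u\<^sup>2 / 2"
proof -
  have "1 - cos u = 2 * (sin (u / 2))\<^sup>2"
    using cos_double_sin[of "u/2"] by simp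
  also have "(sin (u / 2))\<^sup>2 \<le> (u / 2)\<^sup>2"
    using abs_sin_x_le_abs_x[of "u/2"] by (metis abs_ge_zero power2_abs power_mono)
  finally show ?thesis by (simp add: power_divide)
qed

lemma sin_cubic: fixes x :: real assumes x: "0 \<le> x" shows "x - sin x \<le> x ^ 3 / 6"
proof -
  let ?f = "\<lambda>u. u ^ 3 / 6 - u + sin u"
  have d: "\<And>u. (?f has_real_derivative (u\<^sup>2 / 2 - 1 + cos u)) (at u)"
    by (auto intro!: derivative_eq_intros simp: power2_eq_square)
  have "?f 0 \<le> ?f x"
  proof (rule DERIV_nonneg_imp_nondecreasing[OF x])
    fix u assume "0 \<le> u" "u \<le> x"
    show "\<exists>y. (?f has_real_derivative y) (at u) \<and> 0 \<le> y"
      using d[of u] one_minus_cos_le[of u] by (intro exI[of _ "u\<^sup>2 / 2 - 1 + cos u"]) auto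
  qed
  then show ?thesis by simp
qed
lemma theta_bound:
  fixes t :: real assumes "0 \<le> t"
  shows "0 \<le> t\<^sup>2 - 4 * (sin (t / 2))\<^sup>2" "t\<^sup>2 - 4 * (sin (t / 2))\<^sup>2 \<le> t ^ 4 / 12"
proof -
  define x where "x = t / 2"
  define s where "s = sin x"
  have x0: "0 \<le> x" using assms x_def by simp
  have s1: "\<bar>s\<bar> \<le> x" using abs_sin_x_le_abs_x[of x] x0 s_def by simp
  have s2: "x - s \<le> x ^ 3 / 6" using sin_cubic[OF x0] s_def by simp
  have e: "t\<^sup>2 - 4 * (sin (t / 2))\<^sup>2 = 4 * ((x - s) * (x + s))"
    unfolding s_def x_def by (simp add: power2_eq_square algebra_simps)
  have a: "0 \<le> x - s" "0 \<le> x + s" "x + s \<le> 2 * x" using s1 by (auto simp: abs_le_iff)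
  show "0 \<le> t\<^sup>2 - 4 * (sin (t / 2))\<^sup>2" unfolding e using a by simp
  have "(x - s) * (x + s) \<le> (x ^ 3 / 6) * (2 * x)"
    using a s2 by (intro mult_mono) auto
  then have "4 * ((x - s) * (x + s)) \<le> 4 * ((x ^ 3 / 6) * (2 * x))" by simp
  also have "\<dots> = t ^ 4 / 12" unfolding x_def by (simp add: power_divide eval_nat_numeral field_simps)
  finally show "t\<^sup>2 - 4 * (sin (t / 2))\<^sup>2 \<le> t ^ 4 / 12" unfolding e .
qed


definition ygrid :: "nat \<Rightarrow> nat \<Rightarrow> nat \<Rightarrow> real" where
  "ygrid J p = (\<lambda>j. sqrt 2 * cos (real p * pi / real J * (real j + 1 / 2)))"

definition nu :: "real \<Rightarrow> nat \<Rightarrow> nat \<Rightarrow> real" where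
  "nu L J p = 4 * (sin (real p * pi / real J / 2))\<^sup>2 / (dx L J)\<^sup>2"

lemma Y_rec:
  fixes th x :: real
  shows "sqrt 2 * cos (th * ((x - 1) + 1 / 2)) + sqrt 2 * cos (th * ((x + 1) + 1 / 2))
         = 2 * cos th * (sqrt 2 * cos (th * (x + 1 / 2)))"
proof -
  have a: "th * ((x - 1) + 1 / 2) = th * (x + 1 / 2) - th" by (simp add: algebra_simps)
  have b: "th * ((x + 1) + 1 / 2) = th * (x + 1 / 2) + th" by (simp add: algebra_simps)
  define A where "A = th * (x + 1 / 2)"
  have c: "cos (A - th) + cos (A + th) = 2 * cos th * cos A"
    by (simp add: cos_add cos_diff)
  have "sqrt 2 * cos (A - th) + sqrt 2 * cos (A + th) = 2 * cos th * (sqrt 2 * cos A)"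
    using arg_cong[OF c, of "\<lambda>z. sqrt 2 * z"] by (simp add: distrib_left mult.left_commute)
  then show ?thesis using a b unfolding A_def by simp
qed

lemma ygrid_eig:
  assumes J: "2 \<le> J" and j: "j < J"
  shows "Pdelta L J (ygrid J p) j = - nu L J p * ygrid J p j"
proof -
  define th where "th = real p * pi / real J"
  define Y where "Y x = sqrt 2 * cos (th * (x + 1 / 2))" for x
  have yg: "ygrid J p i = Y (real i)" for i unfolding ygrid_def Y_def th_def by simp
  have rec: "Y (x - 1) + Y (x + 1) = 2 * cos th * Y x" for x unfolding Y_def by (rule Y_rec)
  have s0: "Y (-1) = Y 0"
  proof -
    have e: "th * (-1 + 1 / 2) = - (th * (0 + 1 / 2))" by simp
    have "cos (th * (-1 + 1 / 2)) = cos (th * (0 + 1 / 2))"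
      unfolding e by (rule cos_minus)
    then show ?thesis unfolding Y_def by simp
  qed
  have J0: "real J \<noteq> 0" using J by simp
  have thJ: "th * real J = real p * pi" unfolding th_def using J0 by simp
  have sJ: "Y (real J) = Y (real J - 1)"
  proof -
    have a: "th * (real J + 1 / 2) = real p * pi + th / 2" using thJ by (simp add: algebra_simps)
    have b: "th * (real J - 1 + 1 / 2) = real p * pi - th / 2" using thJ by (simp add: algebra_simps)
    show ?thesis unfolding Y_def a b cos_add cos_diff by simp
  qed
  have nu_eq: "- nu L J p = (2 * cos th - 2) / (dx L J)\<^sup>2"
  proof -
    have e: "2 * cos th - 2 = - (4 * (sin (th / 2))\<^sup>2)" using cos_double_sin[of "th / 2"] by simp
    show ?thesis unfolding nu_def th_def[symmetric] e by simp
  qed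
  have main: "(if j = 0 \<or> j = J - 1 then -1 else -2) * Y (real j)
       + (if 0 < j then Y (real (j - 1)) else 0) + (if j + 1 < J then Y (real (j + 1)) else 0)
       = (2 * cos th - 2) * Y (real j)"
  proof (cases "j = 0")
    case True
    then have "j + 1 < J" using J by simp
    then show ?thesis using True rec[of 0] s0 by (simp add: algebra_simps)
  next
    case False
    note j0 = False
    show ?thesis
    proof (cases "j = J - 1")
      case True
      have r1: "real (j - 1) = real J - 1 - 1" using True j0 J by (simp add: of_nat_diff)
      have r2: "real j = real J - 1" using True J by (simp add: of_nat_diff)
      show ?thesis using True j0 rec[of "real J - 1"] sJ unfolding r1 r2 by (simp add: algebra_simps)
    next
      case False
      then have "j + 1 < J" using j by simp
      moreover have "real (j - 1) = real j - 1" using j0 by (simp add: of_nat_diff)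
      ultimately show ?thesis using False j0 rec[of "real j"] by (simp add: algebra_simps)
    qed
  qed
  have "Pdelta L J (ygrid J p) j = (1 / (dx L J)\<^sup>2) * ((2 * cos th - 2) * Y (real j))"
    unfolding Pdelta_def yg using main by simp
  then show ?thesis unfolding nu_eq yg by simp
qed


lemma frac_arith:
  fixes N i :: real
  assumes N: "2 \<le> N" and i0: "0 \<le> i" and i1: "i \<le> N - 1"
  shows "\<bar>i / (N - 1) - (i + 1 / 2) / N\<bar> \<le> 1 / (2 * N)"
proof -
  have pos: "0 < N - 1" "0 < N" using N by auto
  have e: "i / (N - 1) - (i + 1 / 2) / N = (2 * i - N + 1) / (2 * N * (N - 1))"
    using pos by (simp add: field_simps)
  have b: "\<bar>2 * i - N + 1\<bar> \<le> N - 1" using i0 i1 by (simp add: abs_le_iff)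
  have "\<bar>(2 * i - N + 1) / (2 * N * (N - 1))\<bar> = \<bar>2 * i - N + 1\<bar> / (2 * N * (N - 1))"
    using pos by (simp add: abs_divide)
  also have "\<dots> \<le> (N - 1) / (2 * N * (N - 1))"
    using pos b by (intro divide_right_mono) auto
  also have "\<dots> = 1 / (2 * N)" using pos by (simp add: field_simps)
  finally show ?thesis unfolding e .
qed

lemma dx_eq: "dx L J = L / (real J - 1)" unfolding dx_def by simp

lemma dx_pos: "0 < L \<Longrightarrow> 2 \<le> J \<Longrightarrow> 0 < dx L J"
  unfolding dx_def by simp

lemma dx_le: "0 < L \<Longrightarrow> 2 \<le> J \<Longrightarrow> dx L J \<le> L"
  unfolding dx_def by (simp add: field_simps)

lemma d_bound:
  assumes L: "0 < L" and J: "2 \<le> J" and j: "j < J" and p: "0 < p"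
  shows "\<bar>cfun L p (real j * dx L J) - ygrid J p j\<bar> \<le> real p * pi * dx L J / L"
proof -
  define N where "N = real J"
  define i where "i = real j"
  have N2: "2 \<le> N" using J N_def by simp
  have i1: "i \<le> N - 1" using j unfolding i_def N_def by linarith
  have h: "dx L J = L / (N - 1)" unfolding dx_def N_def by simp
  define a where "a = real p * pi * (i * dx L J) / L"
  define b where "b = real p * pi / N * (i + 1 / 2)"
  have ab: "a - b = real p * pi * (i / (N - 1) - (i + 1 / 2) / N)"
    unfolding a_def b_def h using L N2 by (simp add: field_simps)
  have "\<bar>a - b\<bar> = real p * pi * \<bar>i / (N - 1) - (i + 1 / 2) / N\<bar>"
    unfolding ab by (simp add: abs_mult)
  also have "\<dots> \<le> real p * pi * (1 / (2 * N))"
    using frac_arith[OF N2 _ i1] i_def by (intro mult_left_mono) auto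
  also have "\<dots> \<le> real p * pi * (1 / (2 * (N - 1)))"
    using N2 by (intro mult_left_mono divide_left_mono) auto
  also have "\<dots> = real p * pi * dx L J / L / 2" unfolding h using L N2 by (simp add: field_simps)
  finally have ab2: "\<bar>a - b\<bar> \<le> real p * pi * dx L J / L / 2" .
  have "cfun L p (real j * dx L J) - ygrid J p j = sqrt 2 * (cos a - cos b)"
    unfolding cfun_def ygrid_def a_def b_def i_def N_def using p by (simp add: algebra_simps)
  then have "\<bar>cfun L p (real j * dx L J) - ygrid J p j\<bar> = sqrt 2 * \<bar>cos a - cos b\<bar>"
    by (simp add: abs_mult)
  also have "\<dots> \<le> 2 * \<bar>a - b\<bar>"
    using cos_diff_le[of a b] sqrt2_less_2 by (intro mult_mono) auto
  also have "\<dots> \<le> 2 * (real p * pi * dx L J / L / 2)" using ab2 by (rule mult_left_mono) simp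
  also have "\<dots> = real p * pi * dx L J / L" by simp
  finally show ?thesis .
qed

lemma nu_bound:
  assumes L: "0 < L" and J: "2 \<le> J"
  shows "0 \<le> (real p * pi / L)\<^sup>2 - nu L J p"
    and "(real p * pi / L)\<^sup>2 - nu L J p \<le> 2 * (real p * pi / L)\<^sup>2 * dx L J / L + (real p * pi / L) ^ 4 * dx L J * L"
proof -
  define N where "N = real J"
  define h where "h = dx L J"
  define w where "w = real p * pi / L"
  define th where "th = real p * pi / real J"
  have N2: "2 \<le> N" using J N_def by simp
  have h_eq: "h = L / (N - 1)" unfolding h_def dx_def N_def by simp
  have hpos: "0 < h" unfolding h_eq using L N2 by simp
  have hL: "h \<le> L" unfolding h_def using dx_le[OF L J] .
  have w0: "0 \<le> w" unfolding w_def using L by simp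
  have th_eq: "th = w * h * ((N - 1) / N)" unfolding th_def w_def h_eq N_def[symmetric] using L N2 by (simp add: field_simps)
  have th0: "0 \<le> th" unfolding th_def by simp
  have th_le: "th \<le> w * h" unfolding th_eq
    by (rule mult_left_le) (use w0 hpos N2 in auto)
  have nu_eq: "nu L J p = 4 * (sin (th / 2))\<^sup>2 / h\<^sup>2" unfolding nu_def th_def h_def by simp
  have split: "w\<^sup>2 - nu L J p = (w\<^sup>2 - th\<^sup>2 / h\<^sup>2) + (th\<^sup>2 - 4 * (sin (th / 2))\<^sup>2) / h\<^sup>2"
    unfolding nu_eq by (simp add: diff_divide_distrib)
  have T1: "0 \<le> w\<^sup>2 - th\<^sup>2 / h\<^sup>2" "w\<^sup>2 - th\<^sup>2 / h\<^sup>2 \<le> 2 * w\<^sup>2 * h / L"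
  proof -
    have e0: "th / h = w * ((N - 1) / N)" unfolding th_eq using hpos by simp
    have e: "th\<^sup>2 / h\<^sup>2 = w\<^sup>2 * ((N - 1) / N)\<^sup>2"
      by (simp only: power_divide[symmetric] e0 power_mult_distrib)
    have q0: "0 \<le> (N - 1) / N" "(N - 1) / N \<le> 1" using N2 by auto
    have q1: "((N - 1) / N)\<^sup>2 \<le> 1" using q0 by (simp add: power_le_one)
    show "0 \<le> w\<^sup>2 - th\<^sup>2 / h\<^sup>2" unfolding e using q1 by (simp add: mult_left_le)
    have "1 - ((N - 1) / N)\<^sup>2 = (2 * N - 1) / N\<^sup>2" using N2 by (simp add: field_simps power2_eq_square)
    also have "\<dots> \<le> 2 / N" using N2 by (simp add: field_simps power2_eq_square)
    also have "\<dots> \<le> 2 * h / L" unfolding h_eq using L N2 by (simp add: field_simps)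
    finally have "1 - ((N - 1) / N)\<^sup>2 \<le> 2 * h / L" .
    then have "w\<^sup>2 * (1 - ((N - 1) / N)\<^sup>2) \<le> w\<^sup>2 * (2 * h / L)" by (intro mult_left_mono) auto
    then show "w\<^sup>2 - th\<^sup>2 / h\<^sup>2 \<le> 2 * w\<^sup>2 * h / L" unfolding e by (simp add: algebra_simps)
  qed
  have T2: "0 \<le> (th\<^sup>2 - 4 * (sin (th / 2))\<^sup>2) / h\<^sup>2" "(th\<^sup>2 - 4 * (sin (th / 2))\<^sup>2) / h\<^sup>2 \<le> w ^ 4 * h * L"
  proof -
    show "0 \<le> (th\<^sup>2 - 4 * (sin (th / 2))\<^sup>2) / h\<^sup>2" using theta_bound(1)[OF th0] by simp
    have "(th\<^sup>2 - 4 * (sin (th / 2))\<^sup>2) / h\<^sup>2 \<le> (th ^ 4 / 12) / h\<^sup>2"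
      using theta_bound(2)[OF th0] by (intro divide_right_mono) auto
    also have "\<dots> \<le> (w * h) ^ 4 / h\<^sup>2"
    proof (intro divide_right_mono)
      have "th ^ 4 \<le> (w * h) ^ 4" using th_le th0 by (rule power_mono)
      moreover have "0 \<le> th ^ 4" using th0 by simp
      ultimately show "th ^ 4 / 12 \<le> (w * h) ^ 4" by linarith
    qed simp
    also have "\<dots> = w ^ 4 * h * h" using hpos by (simp add: power_mult_distrib power4_eq_xxxx power2_eq_square)
    also have "\<dots> \<le> w ^ 4 * h * L" using hL hpos w0 by (intro mult_left_mono) auto
    finally show "(th\<^sup>2 - 4 * (sin (th / 2))\<^sup>2) / h\<^sup>2 \<le> w ^ 4 * h * L" .
  qed
  show "0 \<le> (real p * pi / L)\<^sup>2 - nu L J p" unfolding w_def[symmetric] using split T1(1) T2(1) by linarith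
  show "(real p * pi / L)\<^sup>2 - nu L J p \<le> 2 * (real p * pi / L)\<^sup>2 * dx L J / L + (real p * pi / L) ^ 4 * dx L J * L"
    unfolding w_def[symmetric] h_def[symmetric] using split T1(2) T2(2) by linarith
qed

lemma geom_bound:
  assumes dt: "0 < dt" and c: "0 < c"
  shows "(\<Sum>k<n. dt * exp (- c * (real k * dt))) \<le> dt + 1 / c"
proof -
  define q where "q = exp (- (c * dt))"
  have q0: "0 < q" unfolding q_def by simp
  have q1: "q < 1" unfolding q_def using dt c by simp
  have e: "exp (- (c * (real k * dt))) = q ^ k" for k
    unfolding q_def by (simp add: exp_of_nat_mult[symmetric] algebra_simps)
  have "(\<Sum>k<n. q ^ k) = (1 - q ^ n) / (1 - q)" using q1 by (simp add: sum_gp_strict)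
  also have "\<dots> \<le> 1 / (1 - q)" using q0 q1 by (intro divide_right_mono) auto
  finally have s: "(\<Sum>k<n. q ^ k) \<le> 1 / (1 - q)" .
  have "1 + c * dt \<le> exp (c * dt)" by (rule exp_ge_add_one_self)
  then have "q * (1 + c * dt) \<le> 1" unfolding q_def by (simp add: exp_minus field_simps)
  then have "1 / (1 - q) \<le> (1 + c * dt) / (c * dt)"
    using q1 dt c by (simp add: field_simps)
  with s have "(\<Sum>k<n. q ^ k) \<le> (1 + c * dt) / (c * dt)" by linarith
  then have "dt * (\<Sum>k<n. q ^ k) \<le> dt * ((1 + c * dt) / (c * dt))"
    by (rule mult_left_mono) (use dt in auto)
  also have "\<dots> = dt + 1 / c" using dt c by (simp add: field_simps)
  finally show ?thesis by (simp add: e sum_distrib_left)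
qed


definition Dk :: "real \<Rightarrow> nat \<Rightarrow> real \<Rightarrow> nat \<Rightarrow> real" where
  "Dk L p dt k = exp (- (real p)\<^sup>2 * pi\<^sup>2 * (real k * dt) / L\<^sup>2)"

definition Vmode :: "real \<Rightarrow> nat \<Rightarrow> nat \<Rightarrow> nat \<Rightarrow> real" where
  "Vmode L J p = (\<lambda>j. - (real p * pi / L)\<^sup>2 * cfun L p (real j * dx L J) - Pdelta L J (Pi_grid L J (cfun L p)) j)"

definition Emode :: "real \<Rightarrow> nat \<Rightarrow> real \<Rightarrow> nat \<Rightarrow> nat \<Rightarrow> nat \<Rightarrow> real" where
  "Emode L J dt n p = (\<lambda>j. dt * (\<Sum>k<n. (scheme_op L J dt ^^ (n - 1 - k)) (\<lambda>i. Dk L p dt k * Vmode L J p i) j))"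

definition Kc :: "real \<Rightarrow> real" where
  "Kc L = (2 * (2 * pi\<^sup>2 + pi ^ 4) + pi ^ 3) * (1 + L\<^sup>2 / pi\<^sup>2) / L ^ 3 + 2 * pi / L"

lemma Kc_pos: "0 < L \<Longrightarrow> 0 < Kc L"
  unfolding Kc_def by (intro add_pos_pos divide_pos_pos mult_pos_pos) auto

lemma Dk_eq: "0 < L \<Longrightarrow> Dk L p dt k = exp (- ((real p * pi / L)\<^sup>2) * (real k * dt))"
  unfolding Dk_def by (simp add: power_divide power_mult_distrib)

lemma Dk_pos: "0 < Dk L p dt k" unfolding Dk_def by simp

lemma Dk_0: "Dk L p dt 0 = 1" unfolding Dk_def by simp

lemma Dk_mono:
  assumes "0 \<le> dt" "k \<le> k'"
  shows "Dk L p dt k' \<le> Dk L p dt k"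
proof -
  have "real k * dt \<le> real k' * dt" using assms by (intro mult_right_mono) auto
  then have "(real p)\<^sup>2 * pi\<^sup>2 * (real k * dt) / L\<^sup>2 \<le> (real p)\<^sup>2 * pi\<^sup>2 * (real k' * dt) / L\<^sup>2"
    by (intro divide_right_mono mult_left_mono) auto
  then show ?thesis unfolding Dk_def by simp
qed

lemma GS_bound:
  assumes L: "0 < L" and dt: "0 < dt" "dt < 1" and p: "0 < p"
  shows "(\<Sum>k<n. dt * Dk L p dt k) \<le> 1 + L\<^sup>2 / pi\<^sup>2"
proof -
  define c where "c = (real p * pi / L)\<^sup>2"
  have c0: "0 < c" unfolding c_def using L p by simp
  have "(\<Sum>k<n. dt * Dk L p dt k) = (\<Sum>k<n. dt * exp (- c * (real k * dt)))"
    unfolding Dk_eq[OF L] c_def by simp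
  also have "\<dots> \<le> dt + 1 / c" by (rule geom_bound[OF dt(1) c0])
  also have "1 / c \<le> L\<^sup>2 / pi\<^sup>2"
  proof -
    have "pi\<^sup>2 \<le> (real p * pi)\<^sup>2" using p by (simp add: power_mult_distrib)
    then have "pi\<^sup>2 / L\<^sup>2 \<le> c" unfolding c_def power_divide using L by (intro divide_right_mono) auto
    then have "1 / c \<le> 1 / (pi\<^sup>2 / L\<^sup>2)" using L c0 by (intro divide_left_mono) auto
    then show ?thesis by simp
  qed
  finally show ?thesis using dt by linarith
qed

lemma Pdelta_expand:
  "Pdelta L J x j = (1 / (dx L J)\<^sup>2) *
     ((if j = 0 \<or> j = J - 1 then -1 else -2) * x j
      + (if 0 < j then 1 else 0) * x (j - 1) + (if j + 1 < J then 1 else 0) * x (j + 1))"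
  unfolding Pdelta_def by simp

lemma Pdelta_diff: "Pdelta L J (\<lambda>i. a i - b i) j = Pdelta L J a j - Pdelta L J b j"
  unfolding Pdelta_expand by (simp add: algebra_simps)

lemma Vmode_decomp:
  fixes L :: real and p :: nat
  assumes J: "2 \<le> J" and j: "j < J" and dt: "0 < dt"
  defines "y \<equiv> ygrid J p"
  defines "d \<equiv> (\<lambda>i. ygrid J p i - Pi_grid L J (cfun L p) i)"
  shows "Vmode L J p j = (nu L J p - (real p * pi / L)\<^sup>2) * y j + (real p * pi / L)\<^sup>2 * d j
            + (1 / dt) * (scheme_op L J dt d j - d j)"
proof -
  define cg where "cg = Pi_grid L J (cfun L p)"
  have cg: "cg = (\<lambda>i. y i - d i)" unfolding cg_def y_def d_def by simp
  have P: "Pdelta L J cg j = - nu L J p * y j - Pdelta L J d j"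
    unfolding cg Pdelta_diff using ygrid_eig[OF J j] y_def by simp
  have S: "(1 / dt) * (scheme_op L J dt d j - d j) = Pdelta L J d j"
    unfolding scheme_op_def using dt by simp
  have "Vmode L J p j = - (real p * pi / L)\<^sup>2 * cg j - Pdelta L J cg j"
    unfolding Vmode_def cg_def Pi_grid_def by simp
  also have "\<dots> = (nu L J p - (real p * pi / L)\<^sup>2) * y j + (real p * pi / L)\<^sup>2 * d j + Pdelta L J d j"
    unfolding P unfolding cg by (simp add: algebra_simps)
  finally show ?thesis unfolding S .
qed


lemma ygrid_norm: "0 < J \<Longrightarrow> l2norm J (ygrid J p) \<le> sqrt 2"
  by (rule l2norm_le_const) (auto simp: ygrid_def abs_mult)

lemma dgrid_norm:
  assumes L: "0 < L" and J: "2 \<le> J" and p: "0 < p"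
  shows "l2norm J (\<lambda>i. ygrid J p i - Pi_grid L J (cfun L p) i) \<le> real p * pi * dx L J / L"
proof (rule l2norm_le_const)
  show "0 < J" using J by simp
  fix j assume "j < J"
  from d_bound[OF L J this p] show "\<bar>ygrid J p j - Pi_grid L J (cfun L p) j\<bar> \<le> real p * pi * dx L J / L"
    unfolding Pi_grid_def by (simp add: abs_minus_commute)
qed

lemma Emode_decomp:
  fixes L dt :: real and p n :: nat
  assumes J: "2 \<le> J" and dt: "0 < dt" and j: "j < J"
  defines "y \<equiv> ygrid J p"
  defines "d \<equiv> (\<lambda>i. ygrid J p i - Pi_grid L J (cfun L p) i)"
  defines "c \<equiv> (real p * pi / L)\<^sup>2"
  defines "nv \<equiv> nu L J p"
  defines "X \<equiv> (\<lambda>m. (scheme_op L J dt ^^ m) d)"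
  shows "Emode L J dt n p j =
      (\<Sum>k<n. ((nv - c) * (dt * Dk L p dt k)) * (scheme_op L J dt ^^ (n - 1 - k)) y j)
    + (\<Sum>k<n. (c * (dt * Dk L p dt k)) * X (n - 1 - k) j)
    + (\<Sum>k<n. Dk L p dt k * (X (Suc (n - 1 - k)) j - X (n - 1 - k) j))"
proof -
  have termk: "(scheme_op L J dt ^^ m) (\<lambda>i. Dk L p dt k * Vmode L J p i) j
      = (Dk L p dt k * (nv - c)) * (scheme_op L J dt ^^ m) y j + (Dk L p dt k * c) * X m j
        + (Dk L p dt k / dt) * (X (Suc m) j - X m j)" for m k
  proof -
    have "(scheme_op L J dt ^^ m) (\<lambda>i. Dk L p dt k * Vmode L J p i) j
        = (scheme_op L J dt ^^ m) (\<lambda>i. (Dk L p dt k * (nv - c)) * y i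
            + ((Dk L p dt k * c) * d i + (Dk L p dt k / dt) * (scheme_op L J dt d i - d i))) j"
    proof (rule iter_local[OF _ j], intro allI impI)
      fix i assume i: "i < J"
      show "Dk L p dt k * Vmode L J p i = (Dk L p dt k * (nv - c)) * y i
            + ((Dk L p dt k * c) * d i + (Dk L p dt k / dt) * (scheme_op L J dt d i - d i))"
        unfolding Vmode_decomp[OF J i dt] y_def d_def c_def nv_def by (simp add: algebra_simps)
    qed
    also have "\<dots> = (Dk L p dt k * (nv - c)) * (scheme_op L J dt ^^ m) y j
        + ((Dk L p dt k * c) * (scheme_op L J dt ^^ m) d j
           + (Dk L p dt k / dt) * ((scheme_op L J dt ^^ m) (scheme_op L J dt d) j - (scheme_op L J dt ^^ m) d j))"
      by (simp only: iter_add iter_scale iter_diff)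
    also have "(scheme_op L J dt ^^ m) (scheme_op L J dt d) = X (Suc m)"
      unfolding X_def funpow_Suc_right comp_apply by (rule refl)
    finally show ?thesis unfolding X_def by (simp add: algebra_simps)
  qed
  have "Emode L J dt n p j = (\<Sum>k<n. dt * (scheme_op L J dt ^^ (n - 1 - k)) (\<lambda>i. Dk L p dt k * Vmode L J p i) j)"
    unfolding Emode_def by (simp add: sum_distrib_left)
  also have "\<dots> = (\<Sum>k<n. ((nv - c) * (dt * Dk L p dt k)) * (scheme_op L J dt ^^ (n - 1 - k)) y j
      + (c * (dt * Dk L p dt k)) * X (n - 1 - k) j
      + Dk L p dt k * (X (Suc (n - 1 - k)) j - X (n - 1 - k) j))"
  proof (rule sum.cong[OF refl])
    fix k assume "k \<in> {..<n}"
    show "dt * (scheme_op L J dt ^^ (n - 1 - k)) (\<lambda>i. Dk L p dt k * Vmode L J p i) j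
      = ((nv - c) * (dt * Dk L p dt k)) * (scheme_op L J dt ^^ (n - 1 - k)) y j
      + (c * (dt * Dk L p dt k)) * X (n - 1 - k) j
      + Dk L p dt k * (X (Suc (n - 1 - k)) j - X (n - 1 - k) j)"
      unfolding termk using dt by (simp add: algebra_simps)
  qed
  finally show ?thesis by (simp only: sum.distrib)
qed


lemma Emode_bound:
  assumes L: "0 < L" and J: "2 \<le> J" and dt: "0 < dt" "dt < 1" and r: "dt / (dx L J)\<^sup>2 \<le> 1 / 2"
    and p: "0 < p" and n: "1 \<le> n"
  shows "l2norm J (Emode L J dt n p) \<le> Kc L * real p ^ 4 * dx L J"
proof -
  define y where "y = ygrid J p"
  define d where "d = (\<lambda>i. ygrid J p i - Pi_grid L J (cfun L p) i)"
  define c where "c = (real p * pi / L)\<^sup>2"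
  define nv where "nv = nu L J p"
  define X where "X = (\<lambda>m. (scheme_op L J dt ^^ m) d)"
  define h where "h = dx L J"
  define P where "P = real p"
  define del where "del = P * pi * h / L"
  define G where "G = 1 + L\<^sup>2 / pi\<^sup>2"
  define D where "D = Dk L p dt"
  have hpos: "0 < h" unfolding h_def using dx_pos[OF L J] .
  have P1: "1 \<le> P" unfolding P_def using p by simp
  have G0: "0 \<le> G" unfolding G_def by simp
  have contr: "l2norm J ((scheme_op L J dt ^^ m) v) \<le> l2norm J v" for m v
    using iter_contr[OF J _ r] dt by simp
  have yn: "l2norm J y \<le> sqrt 2" unfolding y_def using J by (intro ygrid_norm) simp
  have dn: "l2norm J d \<le> del" unfolding d_def del_def P_def h_def by (rule dgrid_norm[OF L J p])
  have Xn: "l2norm J (X m) \<le> del" for m unfolding X_def using contr[of m d] dn by linarith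
  have GS: "(\<Sum>k<n. dt * D k) \<le> G" unfolding D_def G_def by (rule GS_bound[OF L dt p])
  have D0: "0 \<le> D k" for k unfolding D_def using Dk_pos[of L p dt k] by simp
  have cnv0: "0 \<le> c - nv" unfolding c_def nv_def by (rule nu_bound(1)[OF L J])
  have cnv1: "c - nv \<le> 2 * c * h / L + (real p * pi / L) ^ 4 * h * L"
    unfolding c_def nv_def h_def by (rule nu_bound(2)[OF L J])
  have c0: "0 \<le> c" unfolding c_def by simp
  have del0: "0 \<le> del" unfolding del_def P_def using hpos L by simp
  have A: "l2norm J (\<lambda>j. \<Sum>k<n. ((nv - c) * (dt * D k)) * (scheme_op L J dt ^^ (n - 1 - k)) y j)
           \<le> (c - nv) * sqrt 2 * G"
  proof -
    have "l2norm J (\<lambda>j. \<Sum>k<n. ((nv - c) * (dt * D k)) * (scheme_op L J dt ^^ (n - 1 - k)) y j)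
          \<le> (\<Sum>k<n. l2norm J (\<lambda>j. ((nv - c) * (dt * D k)) * (scheme_op L J dt ^^ (n - 1 - k)) y j))"
      by (rule l2norm_sum) simp
    also have "\<dots> = (\<Sum>k<n. ((c - nv) * (dt * D k)) * l2norm J ((scheme_op L J dt ^^ (n - 1 - k)) y))"
    proof (rule sum.cong[OF refl])
      fix k
      have "\<bar>(nv - c) * (dt * D k)\<bar> = (c - nv) * (dt * D k)"
        using cnv0 dt D0[of k] by (simp add: abs_mult)
      then show "l2norm J (\<lambda>j. ((nv - c) * (dt * D k)) * (scheme_op L J dt ^^ (n - 1 - k)) y j)
          = ((c - nv) * (dt * D k)) * l2norm J ((scheme_op L J dt ^^ (n - 1 - k)) y)"
        by (simp only: l2norm_scale)
    qed
    also have "\<dots> \<le> (\<Sum>k<n. ((c - nv) * (dt * D k)) * sqrt 2)"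
    proof (rule sum_mono)
      fix k
      have "l2norm J ((scheme_op L J dt ^^ (n - 1 - k)) y) \<le> sqrt 2" using contr yn order_trans by blast
      then show "((c - nv) * (dt * D k)) * l2norm J ((scheme_op L J dt ^^ (n - 1 - k)) y) \<le> ((c - nv) * (dt * D k)) * sqrt 2"
        using cnv0 dt D0[of k] by (intro mult_left_mono) auto
    qed
    also have "\<dots> = (\<Sum>k<n. ((c - nv) * sqrt 2) * (dt * D k))"
      by (intro sum.cong) (auto simp: mult_ac)
    also have "\<dots> = (c - nv) * sqrt 2 * (\<Sum>k<n. dt * D k)"
      by (rule sum_distrib_left[symmetric])
    also have "\<dots> \<le> (c - nv) * sqrt 2 * G"
      using GS cnv0 by (intro mult_left_mono) auto
    finally show ?thesis .
  qed
  have B: "l2norm J (\<lambda>j. \<Sum>k<n. (c * (dt * D k)) * X (n - 1 - k) j) \<le> c * del * G"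
  proof -
    have "l2norm J (\<lambda>j. \<Sum>k<n. (c * (dt * D k)) * X (n - 1 - k) j)
          \<le> (\<Sum>k<n. l2norm J (\<lambda>j. (c * (dt * D k)) * X (n - 1 - k) j))"
      by (rule l2norm_sum) simp
    also have "\<dots> = (\<Sum>k<n. (c * (dt * D k)) * l2norm J (X (n - 1 - k)))"
    proof (rule sum.cong[OF refl])
      fix k
      have "\<bar>c * (dt * D k)\<bar> = c * (dt * D k)"
        using c0 dt D0[of k] by (simp add: abs_mult)
      then show "l2norm J (\<lambda>j. (c * (dt * D k)) * X (n - 1 - k) j) = (c * (dt * D k)) * l2norm J (X (n - 1 - k))"
        by (simp only: l2norm_scale)
    qed
    also have "\<dots> \<le> (\<Sum>k<n. (c * (dt * D k)) * del)"
      using c0 dt D0 Xn by (intro sum_mono mult_left_mono) auto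
    also have "\<dots> = (\<Sum>k<n. (c * del) * (dt * D k))"
      by (intro sum.cong) (auto simp: mult_ac)
    also have "\<dots> = c * del * (\<Sum>k<n. dt * D k)"
      by (rule sum_distrib_left[symmetric])
    also have "\<dots> \<le> c * del * G"
      using GS c0 del0 by (intro mult_left_mono) auto
    finally show ?thesis .
  qed
  have C: "l2norm J (\<lambda>j. \<Sum>k<n. D k * (X (Suc (n - 1 - k)) j - X (n - 1 - k) j)) \<le> 2 * del"
  proof -
    obtain n' where n': "n = Suc n'" using n by (cases n) auto
    define cc where "cc i = D (n' - i)" for i
    have re: "(\<Sum>k<n. D k * (X (Suc (n - 1 - k)) j - X (n - 1 - k) j))
            = (\<Sum>i<Suc n'. cc i * (X (Suc i) j - X i j))" for j
    proof -
      have "(\<Sum>k<n. D k * (X (Suc (n - 1 - k)) j - X (n - 1 - k) j))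
          = (\<Sum>i<n. D (n - Suc i) * (X (Suc (n - 1 - (n - Suc i))) j - X (n - 1 - (n - Suc i)) j))"
        by (rule sum.nat_diff_reindex[symmetric])
      also have "\<dots> = (\<Sum>i<Suc n'. cc i * (X (Suc i) j - X i j))"
        unfolding n' cc_def by (intro sum.cong) auto
      finally show ?thesis .
    qed
    have ccm: "cc m \<le> cc (Suc m)" for m
      unfolding cc_def D_def using dt by (intro Dk_mono) auto
    have "l2norm J (\<lambda>j. \<Sum>k<n. D k * (X (Suc (n - 1 - k)) j - X (n - 1 - k) j))
          = l2norm J (\<lambda>j. \<Sum>i<Suc n'. cc i * (X (Suc i) j - X i j))"
      unfolding re ..
    also have "\<dots> \<le> 2 * cc n' * del"
      by (rule abel_bound[OF Xn]) (use D0 ccm cc_def in auto)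
    also have "cc n' = 1" unfolding cc_def D_def by (simp add: Dk_0)
    finally show ?thesis by simp
  qed
  have "l2norm J (Emode L J dt n p) =
      l2norm J (\<lambda>j. (\<Sum>k<n. ((nv - c) * (dt * D k)) * (scheme_op L J dt ^^ (n - 1 - k)) y j)
        + (\<Sum>k<n. (c * (dt * D k)) * X (n - 1 - k) j)
        + (\<Sum>k<n. D k * (X (Suc (n - 1 - k)) j - X (n - 1 - k) j)))"
    unfolding D_def y_def nv_def c_def X_def d_def
    by (rule l2norm_cong) (rule Emode_decomp[OF J dt(1)])
  also have "\<dots> \<le> l2norm J (\<lambda>j. (\<Sum>k<n. ((nv - c) * (dt * D k)) * (scheme_op L J dt ^^ (n - 1 - k)) y j)
        + (\<Sum>k<n. (c * (dt * D k)) * X (n - 1 - k) j))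
        + l2norm J (\<lambda>j. \<Sum>k<n. D k * (X (Suc (n - 1 - k)) j - X (n - 1 - k) j))"
    by (rule l2norm_add)
  also have "\<dots> \<le> (l2norm J (\<lambda>j. \<Sum>k<n. ((nv - c) * (dt * D k)) * (scheme_op L J dt ^^ (n - 1 - k)) y j)
        + l2norm J (\<lambda>j. \<Sum>k<n. (c * (dt * D k)) * X (n - 1 - k) j))
        + l2norm J (\<lambda>j. \<Sum>k<n. D k * (X (Suc (n - 1 - k)) j - X (n - 1 - k) j))"
    by (intro add_right_mono l2norm_add)
  also have "\<dots> \<le> ((c - nv) * sqrt 2 * G + c * del * G) + 2 * del"
    using A B C by linarith
  also have "\<dots> \<le> Kc L * real p ^ 4 * dx L J"
  proof -
    define Q where "Q = P ^ 4 * h"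
    have pw: "P ^ 2 \<le> P ^ 4" "P ^ 3 \<le> P ^ 4" "P \<le> P ^ 4"
      using P1 power_increasing[of 2 4 P] power_increasing[of 3 4 P] power_increasing[of 1 4 P] by auto
    have c_eq: "c = P ^ 2 * pi ^ 2 / L ^ 2" unfolding c_def P_def by (simp add: power_divide power_mult_distrib)
    have e1: "2 * c * h / L + (real p * pi / L) ^ 4 * h * L = (2 * pi ^ 2 * P ^ 2 + pi ^ 4 * P ^ 4) * h / L ^ 3"
      unfolding c_eq P_def using L by (simp add: power_divide power_mult_distrib field_simps power2_eq_square power3_eq_cube power4_eq_xxxx)
    have "(2 * pi ^ 2 * P ^ 2 + pi ^ 4 * P ^ 4) * h / L ^ 3 \<le> (2 * pi ^ 2 * P ^ 4 + pi ^ 4 * P ^ 4) * h / L ^ 3"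
      using pw hpos L by (intro divide_right_mono mult_right_mono add_right_mono mult_left_mono) auto
    also have "\<dots> = (2 * pi\<^sup>2 + pi ^ 4) / L ^ 3 * Q" unfolding Q_def by (simp add: algebra_simps)
    finally have cnv2: "c - nv \<le> (2 * pi\<^sup>2 + pi ^ 4) / L ^ 3 * Q" using cnv1 e1 by linarith
    have s2: "sqrt 2 \<le> 2" using sqrt2_less_2 by simp
    have a1: "(c - nv) * sqrt 2 * G \<le> ((2 * pi\<^sup>2 + pi ^ 4) / L ^ 3 * Q) * 2 * G"
      using cnv0 cnv2 s2 G0 by (intro mult_right_mono mult_mono) auto
    have a2: "c * del * G \<le> (pi ^ 3 / L ^ 3 * Q) * G"
    proof -
      have "c * del = pi ^ 3 / L ^ 3 * (P ^ 3 * h)"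
        unfolding c_eq del_def using L by (simp add: field_simps power2_eq_square power3_eq_cube)
      also have "\<dots> \<le> pi ^ 3 / L ^ 3 * Q" unfolding Q_def using pw hpos L
        by (intro mult_left_mono mult_right_mono) auto
      finally show ?thesis using G0 by (intro mult_right_mono) auto
    qed
    have a3: "2 * del \<le> 2 * pi / L * Q"
    proof -
      have "2 * del = 2 * pi / L * (P * h)" unfolding del_def by simp
      also have "\<dots> \<le> 2 * pi / L * Q" unfolding Q_def using pw hpos L
        by (intro mult_left_mono mult_right_mono) auto
      finally show ?thesis .
    qed
    have "Kc L * real p ^ 4 * dx L J = ((2 * pi\<^sup>2 + pi ^ 4) / L ^ 3 * Q) * 2 * G + (pi ^ 3 / L ^ 3 * Q) * G + 2 * pi / L * Q"
      unfolding Kc_def Q_def P_def h_def G_def by (simp add: algebra_simps add_divide_distrib)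
    then show ?thesis using a1 a2 a3 by linarith
  qed
  finally show ?thesis .
qed


definition cf1 :: "real \<Rightarrow> nat \<Rightarrow> real \<Rightarrow> real" where
  "cf1 L p x = - sqrt 2 * (real p * pi / L) * sin (real p * pi * x / L)"

lemma cfun_abs: "\<bar>cfun L p x\<bar> \<le> sqrt 2"
  unfolding cfun_def by (auto simp: abs_mult)

lemma cfun_deriv: assumes L: "L \<noteq> 0" shows "(cfun L p has_field_derivative cf1 L p x) (at x)"
proof (cases "p = 0")
  case True
  have "cfun L p = (\<lambda>x. 1)" using True by (simp add: cfun_def fun_eq_iff)
  then show ?thesis using True by (simp add: cf1_def)
next
  case False
  have "cfun L p = (\<lambda>x. sqrt 2 * cos (real p * pi * x / L))" using False by (simp add: cfun_def fun_eq_iff)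
  moreover have "((\<lambda>x. sqrt 2 * cos (real p * pi * x / L)) has_field_derivative cf1 L p x) (at x)"
    unfolding cf1_def using L by (auto intro!: derivative_eq_intros simp: algebra_simps)
  ultimately show ?thesis by simp
qed

lemma cf1_deriv: assumes L: "L \<noteq> 0" shows "(cf1 L p has_field_derivative (- (real p * pi / L)\<^sup>2 * cfun L p x)) (at x)"
proof (cases "p = 0")
  case True
  have "cf1 L p = (\<lambda>x. 0)" using True by (simp add: cf1_def fun_eq_iff)
  then show ?thesis using True by simp
next
  case False
  have "((\<lambda>x. - sqrt 2 * (real p * pi / L) * sin (real p * pi * x / L)) has_field_derivative
         (- (real p * pi / L)\<^sup>2 * cfun L p x)) (at x)"
    unfolding cfun_def using False L by (auto intro!: derivative_eq_intros simp: algebra_simps power2_eq_square)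
  then show ?thesis unfolding cf1_def[abs_def] by simp
qed

lemma summable_pow_le:
  fixes a :: "nat \<Rightarrow> real"
  assumes s: "summable (\<lambda>p. \<bar>a p\<bar> * real p ^ 4)" and k: "1 \<le> k" "k \<le> 4"
  shows "summable (\<lambda>p. \<bar>a p\<bar> * real p ^ k)"
proof (rule summable_comparison_test'[OF s])
  fix p :: nat
  have "real p ^ k \<le> real p ^ 4"
  proof (cases "p = 0")
    case True then show ?thesis using k by (simp add: power_0_left)
  next
    case False then show ?thesis using k by (intro power_increasing) auto
  qed
  then show "norm (\<bar>a p\<bar> * real p ^ k) \<le> \<bar>a p\<bar> * real p ^ 4"
    by (simp add: mult_left_mono)
qed

lemma summable_abs0:
  fixes a :: "nat \<Rightarrow> real"
  assumes s: "summable (\<lambda>p. \<bar>a p\<bar> * real p ^ 4)"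
  shows "summable (\<lambda>p. \<bar>a p\<bar>)"
proof -
  have "summable (\<lambda>p. \<bar>a (Suc p)\<bar> * real (Suc p) ^ 4)" using s by (subst summable_Suc_iff)
  then have "summable (\<lambda>p. \<bar>a (Suc p)\<bar>)"
  proof (rule summable_comparison_test')
    fix p :: nat
    have "1 \<le> real (Suc p) ^ 4" by simp
    then show "norm \<bar>a (Suc p)\<bar> \<le> \<bar>a (Suc p)\<bar> * real (Suc p) ^ 4"
      by (simp add: mult_le_cancel_left1)
  qed
  then show ?thesis by (subst (asm) summable_Suc_iff)
qed

lemma exp_le1: "0 \<le> t \<Longrightarrow> exp (- (real p)\<^sup>2 * pi\<^sup>2 * t / L\<^sup>2) \<le> 1"
  by simp

lemma sol_second_deriv:
  assumes L: "0 < L" and t: "0 \<le> t" and s: "summable (\<lambda>p. \<bar>alpha L u0 p\<bar> * real p ^ 4)"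
  defines "a \<equiv> (\<lambda>p. alpha L u0 p * exp (- (real p)\<^sup>2 * pi\<^sup>2 * t / L\<^sup>2))"
  shows "(\<lambda>p. a p * (- (real p * pi / L)\<^sup>2 * cfun L p x)) sums deriv (deriv (sol L u0 t)) x"
proof -
  have aa: "\<bar>a p\<bar> \<le> \<bar>alpha L u0 p\<bar>" for p
  proof -
    have "\<bar>a p\<bar> = \<bar>alpha L u0 p\<bar> * exp (- (real p)\<^sup>2 * pi\<^sup>2 * t / L\<^sup>2)"
      unfolding a_def by (simp add: abs_mult)
    also have "\<dots> \<le> \<bar>alpha L u0 p\<bar> * 1" using exp_le1[OF t] by (intro mult_left_mono) auto
    finally show ?thesis by simp
  qed
  have s0: "summable (\<lambda>p. \<bar>alpha L u0 p\<bar>)" by (rule summable_abs0[OF s])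
  have s1: "summable (\<lambda>p. \<bar>alpha L u0 p\<bar> * real p ^ 1)" by (rule summable_pow_le[OF s]) auto
  have s2: "summable (\<lambda>p. \<bar>alpha L u0 p\<bar> * real p ^ 2)" by (rule summable_pow_le[OF s]) auto
  define f where "f p x = a p * cfun L p x" for p x
  define f1 where "f1 p x = a p * cf1 L p x" for p x
  define f2 where "f2 p x = a p * (- (real p * pi / L)\<^sup>2 * cfun L p x)" for p x
  have M0: "norm (f p x) \<le> sqrt 2 * \<bar>alpha L u0 p\<bar>" for p x
    unfolding f_def using aa[of p] cfun_abs[of L p x]
    by (simp add: abs_mult) (metis abs_ge_zero mult.commute mult_mono)
  have M1: "norm (f1 p x) \<le> (sqrt 2 * pi / L) * (\<bar>alpha L u0 p\<bar> * real p ^ 1)" for p x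
  proof -
    have "\<bar>cf1 L p x\<bar> = sqrt 2 * (real p * pi / L) * \<bar>sin (real p * pi * x / L)\<bar>"
      unfolding cf1_def using L by (simp add: abs_mult)
    also have "\<dots> \<le> sqrt 2 * (real p * pi / L) * 1" by (intro mult_left_mono) (use L in auto)
    finally have "\<bar>cf1 L p x\<bar> \<le> sqrt 2 * (real p * pi / L)" by simp
    then have "\<bar>a p\<bar> * \<bar>cf1 L p x\<bar> \<le> \<bar>alpha L u0 p\<bar> * (sqrt 2 * (real p * pi / L))"
      using aa[of p] by (intro mult_mono) auto
    then show ?thesis unfolding f1_def by (simp add: abs_mult algebra_simps)
  qed
  have M2: "norm (f2 p x) \<le> (sqrt 2 * pi\<^sup>2 / L\<^sup>2) * (\<bar>alpha L u0 p\<bar> * real p ^ 2)" for p x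
  proof -
    have "\<bar>- (real p * pi / L)\<^sup>2 * cfun L p x\<bar> \<le> (real p * pi / L)\<^sup>2 * sqrt 2"
      using cfun_abs[of L p x] by (simp add: abs_mult mult_left_mono)
    then have "\<bar>a p\<bar> * \<bar>- (real p * pi / L)\<^sup>2 * cfun L p x\<bar> \<le> \<bar>alpha L u0 p\<bar> * ((real p * pi / L)\<^sup>2 * sqrt 2)"
      using aa[of p] by (intro mult_mono) auto
    then show ?thesis unfolding f2_def by (simp add: abs_mult power_divide power_mult_distrib algebra_simps)
  qed
  have sum0: "summable (\<lambda>p. f p x)" for x
    by (rule summable_comparison_test'[OF summable_mult[OF s0, of "sqrt 2"]]) (use M0 in auto)
  have sum1: "summable (\<lambda>p. f1 p x)" for x
    by (rule summable_comparison_test'[OF summable_mult[OF s1, of "sqrt 2 * pi / L"]]) (use M1 in blast)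
  have sum2: "summable (\<lambda>p. f2 p x)" for x
    by (rule summable_comparison_test'[OF summable_mult[OF s2, of "sqrt 2 * pi\<^sup>2 / L\<^sup>2"]]) (use M2 in blast)
  have uc1: "uniformly_convergent_on UNIV (\<lambda>n x. \<Sum>i<n. f1 i x)"
    by (rule Weierstrass_m_test'[OF _ summable_mult[OF s1, of "sqrt 2 * pi / L"]]) (use M1 in blast)
  have uc2: "uniformly_convergent_on UNIV (\<lambda>n x. \<Sum>i<n. f2 i x)"
    by (rule Weierstrass_m_test'[OF _ summable_mult[OF s2, of "sqrt 2 * pi\<^sup>2 / L\<^sup>2"]]) (use M2 in blast)
  have d1: "((\<lambda>x. \<Sum>n. f n x) has_field_derivative (\<Sum>n. f1 n x)) (at x)" for x
  proof (rule has_field_derivative_series'(2)[of UNIV f f1 0])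
    show "\<And>n x. x \<in> UNIV \<Longrightarrow> (f n has_field_derivative f1 n x) (at x within UNIV)"
      unfolding f_def f1_def by (auto intro!: derivative_eq_intros cfun_deriv simp: L[THEN less_imp_neq, symmetric])
  qed (use uc1 sum0 in auto)
  have d2: "((\<lambda>x. \<Sum>n. f1 n x) has_field_derivative (\<Sum>n. f2 n x)) (at x)" for x
  proof (rule has_field_derivative_series'(2)[of UNIV f1 f2 0])
    show "\<And>n x. x \<in> UNIV \<Longrightarrow> (f1 n has_field_derivative f2 n x) (at x within UNIV)"
      unfolding f1_def f2_def by (auto intro!: derivative_eq_intros cf1_deriv simp: L[THEN less_imp_neq, symmetric])
  qed (use uc2 sum1 in auto)
  have solf: "sol L u0 t = (\<lambda>x. \<Sum>n. f n x)"
    unfolding sol_def f_def a_def by (simp add: fun_eq_iff)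
  have "deriv (sol L u0 t) = (\<lambda>x. \<Sum>n. f1 n x)"
    unfolding solf using d1 by (simp add: fun_eq_iff DERIV_imp_deriv)
  then have "deriv (deriv (sol L u0 t)) x = (\<Sum>n. f2 n x)"
    using d2 by (simp add: DERIV_imp_deriv)
  then show ?thesis using sum2[of x] unfolding f2_def by (simp add: summable_sums)
qed

lemma sol_sums:
  assumes L: "0 < L" and t: "0 \<le> t" and s: "summable (\<lambda>p. \<bar>alpha L u0 p\<bar> * real p ^ 4)"
  shows "(\<lambda>p. alpha L u0 p * exp (- (real p)\<^sup>2 * pi\<^sup>2 * t / L\<^sup>2) * cfun L p x) sums sol L u0 t x"
proof -
  have s0: "summable (\<lambda>p. \<bar>alpha L u0 p\<bar>)" by (rule summable_abs0[OF s])
  have "summable (\<lambda>p. alpha L u0 p * exp (- (real p)\<^sup>2 * pi\<^sup>2 * t / L\<^sup>2) * cfun L p x)"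
  proof (rule summable_comparison_test'[OF summable_mult[OF s0, of "sqrt 2"]])
    fix p :: nat
    have "\<bar>alpha L u0 p * exp (- (real p)\<^sup>2 * pi\<^sup>2 * t / L\<^sup>2)\<bar> \<le> \<bar>alpha L u0 p\<bar>"
      using exp_le1[OF t, of p L] by (simp add: abs_mult mult_left_le)
    then show "norm (alpha L u0 p * exp (- (real p)\<^sup>2 * pi\<^sup>2 * t / L\<^sup>2) * cfun L p x) \<le> sqrt 2 * \<bar>alpha L u0 p\<bar>"
      using cfun_abs[of L p x] by (simp add: abs_mult) (metis abs_ge_zero mult.commute mult_mono)
  qed
  then show ?thesis unfolding sol_def by (simp add: summable_sums)
qed

lemma Pdelta_sums:
  assumes "\<And>i. (\<lambda>p. g p i) sums G i"
  shows "(\<lambda>p. Pdelta L J (g p) j) sums Pdelta L J G j"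
  unfolding Pdelta_expand by (intro sums_add sums_mult assms)

lemma Pdelta_scale: "Pdelta L J (\<lambda>i. c * g i) j = c * Pdelta L J g j"
  unfolding Pdelta_expand by (simp add: algebra_simps)

lemma Ldelta_sums:
  assumes L: "0 < L" and t: "0 \<le> t" and s: "summable (\<lambda>p. \<bar>alpha L u0 p\<bar> * real p ^ 4)"
  shows "(\<lambda>p. alpha L u0 p * exp (- (real p)\<^sup>2 * pi\<^sup>2 * t / L\<^sup>2) * Vmode L J p j) sums Ldelta L J (sol L u0 t) j"
proof -
  define a where "a = (\<lambda>p. alpha L u0 p * exp (- (real p)\<^sup>2 * pi\<^sup>2 * t / L\<^sup>2))"
  have A: "(\<lambda>p. a p * (- (real p * pi / L)\<^sup>2 * cfun L p (real j * dx L J))) sums Pi_grid L J (deriv (deriv (sol L u0 t))) j"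
    unfolding Pi_grid_def a_def by (rule sol_second_deriv[OF L t s])
  have B: "(\<lambda>p. Pdelta L J (\<lambda>i. a p * cfun L p (real i * dx L J)) j) sums Pdelta L J (Pi_grid L J (sol L u0 t)) j"
    by (rule Pdelta_sums) (unfold Pi_grid_def a_def, rule sol_sums[OF L t s])
  have "(\<lambda>p. a p * (- (real p * pi / L)\<^sup>2 * cfun L p (real j * dx L J)) - Pdelta L J (\<lambda>i. a p * cfun L p (real i * dx L J)) j)
        sums (Pi_grid L J (deriv (deriv (sol L u0 t))) j - Pdelta L J (Pi_grid L J (sol L u0 t)) j)"
    by (rule sums_diff[OF A B])
  moreover have "a p * (- (real p * pi / L)\<^sup>2 * cfun L p (real j * dx L J)) - Pdelta L J (\<lambda>i. a p * cfun L p (real i * dx L J)) j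
      = a p * Vmode L J p j" for p
    unfolding Vmode_def Pdelta_scale Pi_grid_def by (simp add: algebra_simps)
  ultimately show ?thesis unfolding Ldelta_def a_def by simp
qed


lemma cos_int_zero:
  fixes L :: real and m :: int
  assumes L: "0 < L" and m: "m \<noteq> 0"
  shows "((\<lambda>x. cos (real_of_int m * pi / L * x)) has_integral 0) {0..L}"
proof -
  define c where "c = real_of_int m * pi / L"
  have c0: "c \<noteq> 0" unfolding c_def using L m by simp
  have d: "((\<lambda>x. sin (c * x) / c) has_vector_derivative cos (c * x)) (at x within {0..L})" for x
    using c0 by (auto intro!: derivative_eq_intros simp: has_real_derivative_iff_has_vector_derivative[symmetric])
  have "((\<lambda>x. cos (c * x)) has_integral (sin (c * L) / c - sin (c * 0) / c)) {0..L}"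
    by (rule fundamental_theorem_of_calculus) (use L d in auto)
  moreover have "sin (c * L) = 0"
  proof -
    have "c * L = pi * real_of_int m" unfolding c_def using L by simp
    then show ?thesis by simp
  qed
  ultimately show ?thesis unfolding c_def by simp
qed

lemma sin_orth:
  fixes L :: real and p q :: nat
  assumes L: "0 < L" and p: "0 < p" and q: "0 < q"
  shows "((\<lambda>x. sin (real p * pi * x / L) * sin (real q * pi * x / L)) has_integral (if p = q then L / 2 else 0)) {0..L}"
proof -
  define a where "a = real_of_int (int p - int q)"
  define b where "b = real_of_int (int p + int q)"
  have e: "sin (real p * pi * x / L) * sin (real q * pi * x / L) = (cos (a * pi / L * x) - cos (b * pi / L * x)) / 2" for x
    unfolding sin_times_sin a_def b_def by (simp add: algebra_simps add_divide_distrib diff_divide_distrib)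
  have B: "((\<lambda>x. cos (b * pi / L * x)) has_integral 0) {0..L}"
    unfolding b_def by (rule cos_int_zero[OF L]) (use p q in simp)
  have A: "((\<lambda>x. cos (a * pi / L * x)) has_integral (if p = q then L else 0)) {0..L}"
  proof (cases "p = q")
    case True
    then have "a = 0" unfolding a_def by simp
    then show ?thesis using True L has_integral_const_real[of "1::real" 0 L] by simp
  next
    case False
    then show ?thesis unfolding a_def using cos_int_zero[OF L, of "int p - int q"] by simp
  qed
  have "((\<lambda>x. (cos (a * pi / L * x) - cos (b * pi / L * x)) / 2) has_integral ((if p = q then L else 0) - 0) / 2) {0..L}"
    by (rule has_integral_divide[OF has_integral_diff[OF A B]])
  moreover have "((if p = q then L else 0) - 0) / 2 = (if p = q then L / 2 else 0)" by simp
  ultimately show ?thesis unfolding e by simp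
qed

lemma bessel_sin:
  fixes L :: real and f :: "real \<Rightarrow> real"
  assumes L: "0 < L" and f: "continuous_on {0..L} f"
  defines "beta \<equiv> (\<lambda>p. integral {0..L} (\<lambda>x. f x * sin (real p * pi * x / L)))"
  shows "(\<Sum>p\<in>{1..N}. (beta p)\<^sup>2) \<le> L / 2 * integral {0..L} (\<lambda>x. (f x)\<^sup>2)"
proof -
  define s where "s p x = sin (real p * pi * x / L)" for p x
  define A where "A = {1..N}"
  define c where "c p = 2 / L * beta p" for p
  have fA: "finite A" unfolding A_def by simp
  have cs: "continuous_on {0..L} (s p)" for p unfolding s_def using L by (auto intro!: continuous_intros)
  have Hf2: "((\<lambda>x. (f x)\<^sup>2) has_integral integral {0..L} (\<lambda>x. (f x)\<^sup>2)) {0..L}"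
    by (intro integrable_integral integrable_continuous_interval continuous_intros f)
  have Hfs: "((\<lambda>x. f x * s p x) has_integral beta p) {0..L}" for p
    unfolding beta_def s_def using L by (auto intro!: integrable_integral integrable_continuous_interval continuous_intros f)
  have Hss: "((\<lambda>x. s p x * s q x) has_integral (if p = q then L / 2 else 0)) {0..L}" if "p \<in> A" "q \<in> A" for p q
    unfolding s_def using that by (intro sin_orth[OF L]) (auto simp: A_def)
  have H1: "((\<lambda>x. \<Sum>p\<in>A. c p * (f x * s p x)) has_integral (\<Sum>p\<in>A. c p * beta p)) {0..L}"
    by (intro has_integral_sum fA has_integral_mult_right Hfs)
  have H2: "((\<lambda>x. \<Sum>p\<in>A. \<Sum>q\<in>A. c p * c q * (s p x * s q x)) has_integral
            (\<Sum>p\<in>A. \<Sum>q\<in>A. c p * c q * (if p = q then L / 2 else 0))) {0..L}"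
    by (intro has_integral_sum fA has_integral_mult_right Hss) auto
  have H: "((\<lambda>x. (f x)\<^sup>2 - 2 * (\<Sum>p\<in>A. c p * (f x * s p x)) + (\<Sum>p\<in>A. \<Sum>q\<in>A. c p * c q * (s p x * s q x))) has_integral
        (integral {0..L} (\<lambda>x. (f x)\<^sup>2) - 2 * (\<Sum>p\<in>A. c p * beta p) + (\<Sum>p\<in>A. \<Sum>q\<in>A. c p * c q * (if p = q then L / 2 else 0)))) {0..L}"
    by (intro has_integral_add has_integral_diff Hf2 has_integral_mult_right H1 H2)
  have pt: "(f x)\<^sup>2 - 2 * (\<Sum>p\<in>A. c p * (f x * s p x)) + (\<Sum>p\<in>A. \<Sum>q\<in>A. c p * c q * (s p x * s q x))
            = (f x - (\<Sum>p\<in>A. c p * s p x))\<^sup>2" for x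
  proof -
    have "(\<Sum>p\<in>A. c p * s p x)\<^sup>2 = (\<Sum>p\<in>A. \<Sum>q\<in>A. c p * c q * (s p x * s q x))"
      unfolding power2_eq_square sum_product by (simp add: mult_ac)
    moreover have "(\<Sum>p\<in>A. c p * (f x * s p x)) = f x * (\<Sum>p\<in>A. c p * s p x)"
      by (simp add: sum_distrib_left mult_ac)
    ultimately show ?thesis by (simp add: power2_diff)
  qed
  have nonneg: "0 \<le> integral {0..L} (\<lambda>x. (f x)\<^sup>2) - 2 * (\<Sum>p\<in>A. c p * beta p) + (\<Sum>p\<in>A. \<Sum>q\<in>A. c p * c q * (if p = q then L / 2 else 0))"
    by (rule has_integral_nonneg[OF H]) (simp add: pt)
  have dd: "(\<Sum>p\<in>A. \<Sum>q\<in>A. c p * c q * (if p = q then L / 2 else 0)) = (\<Sum>p\<in>A. c p * c p * (L / 2))"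
  proof (rule sum.cong[OF refl])
    fix p assume "p \<in> A"
    have "(\<Sum>q\<in>A. c p * c q * (if p = q then L / 2 else 0)) = (\<Sum>q\<in>A. if p = q then c p * c q * (L / 2) else 0)"
      by (intro sum.cong) auto
    also have "\<dots> = c p * c p * (L / 2)" using \<open>p \<in> A\<close> fA by (simp add: sum.delta)
    finally show "(\<Sum>q\<in>A. c p * c q * (if p = q then L / 2 else 0)) = c p * c p * (L / 2)" .
  qed
  have e2: "2 * (\<Sum>p\<in>A. c p * beta p) - (\<Sum>p\<in>A. c p * c p * (L / 2)) = 2 / L * (\<Sum>p\<in>A. (beta p)\<^sup>2)"
  proof -
    have "2 * (c p * beta p) - c p * c p * (L / 2) = 2 / L * (beta p)\<^sup>2" for p
      unfolding c_def using L by (simp add: field_simps power2_eq_square)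
    then show ?thesis by (simp add: sum_distrib_left sum_subtractf[symmetric])
  qed
  have "2 / L * (\<Sum>p\<in>A. (beta p)\<^sup>2) \<le> integral {0..L} (\<lambda>x. (f x)\<^sup>2)"
    using nonneg dd e2 by linarith
  then have "(\<Sum>p\<in>A. (beta p)\<^sup>2) \<le> L / 2 * integral {0..L} (\<lambda>x. (f x)\<^sup>2)"
    using L by (simp add: field_simps)
  then show ?thesis unfolding A_def .
qed


lemma ibp_gen:
  fixes F f phi phi' :: "real \<Rightarrow> real"
  assumes L: "0 \<le> L" and cF: "continuous_on {0..L} F" and cf: "continuous_on {0..L} f"
    and dF: "\<And>x. x \<in> {0..L} \<Longrightarrow> (F has_vector_derivative f x) (at x within {0..L})"
    and dp: "\<And>x. (phi has_real_derivative phi' x) (at x)"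
    and cp: "continuous_on {0..L} phi" and cp': "continuous_on {0..L} phi'"
  shows "integral {0..L} (\<lambda>x. f x * phi x) = F L * phi L - F 0 * phi 0 - integral {0..L} (\<lambda>x. F x * phi' x)"
proof -
  have d: "((\<lambda>x. F x * phi x) has_vector_derivative (f x * phi x + F x * phi' x)) (at x within {0..L})"
    if x: "x \<in> {0..L}" for x
  proof -
    have a: "(F has_real_derivative f x) (at x within {0..L})"
      using dF[OF x] by (simp add: has_real_derivative_iff_has_vector_derivative)
    have b: "(phi has_real_derivative phi' x) (at x within {0..L})"
      using dp[of x] by (rule has_field_derivative_at_within)
    have "((\<lambda>x. F x * phi x) has_real_derivative (f x * phi x + F x * phi' x)) (at x within {0..L})"
      by (rule DERIV_cong[OF DERIV_mult[OF a b]]) (simp add: mult.commute)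
    then show ?thesis by (simp add: has_real_derivative_iff_has_vector_derivative)
  qed
  have ftc: "((\<lambda>x. f x * phi x + F x * phi' x) has_integral (F L * phi L - F 0 * phi 0)) {0..L}"
    by (rule fundamental_theorem_of_calculus[OF L d])
  have i2: "((\<lambda>x. F x * phi' x) has_integral integral {0..L} (\<lambda>x. F x * phi' x)) {0..L}"
    by (intro integrable_integral integrable_continuous_interval continuous_intros cF cp')
  have "((\<lambda>x. (f x * phi x + F x * phi' x) - F x * phi' x) has_integral
        (F L * phi L - F 0 * phi 0 - integral {0..L} (\<lambda>x. F x * phi' x))) {0..L}"
    by (rule has_integral_diff[OF ftc i2])
  moreover have "(\<lambda>x. (f x * phi x + F x * phi' x) - F x * phi' x) = (\<lambda>x. f x * phi x)" by auto
  ultimately have "((\<lambda>x. f x * phi x) has_integral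
        (F L * phi L - F 0 * phi 0 - integral {0..L} (\<lambda>x. F x * phi' x))) {0..L}" by simp
  then show ?thesis by (rule integral_unique)
qed

lemma H6_facts:
  assumes L: "0 < L" and H: "H6_derivs L u0 g"
  shows "\<And>k. k < 6 \<Longrightarrow> continuous_on {0..L} (g k)"
    and "\<And>k x. k < 5 \<Longrightarrow> x \<in> {0..L} \<Longrightarrow> (g k has_vector_derivative g (Suc k) x) (at x within {0..L})"
    and "\<And>x. x \<in> {0..L} \<Longrightarrow> g 0 x = u0 x"
proof -
  have all: "(\<forall>x\<in>{0..L}. g 0 x = u0 x) \<and>
     (\<forall>k<6. \<forall>x\<in>{0..L}. (g (Suc k) has_integral (g k x - g k 0)) {0..x})"
    using H unfolding H6_derivs_def by simp
  have hi: "\<And>k x. k < 6 \<Longrightarrow> x \<in> {0..L} \<Longrightarrow> (g (Suc k) has_integral (g k x - g k 0)) {0..x}"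
    using all by simp
  have eq: "g k x = g k 0 + integral {0..x} (g (Suc k))" if "k < 6" "x \<in> {0..L}" for k x
    using integral_unique[OF hi[OF that]] by simp
  have int: "g (Suc k) integrable_on {0..L}" if "k < 6" for k
  proof -
    have "L \<in> {0..L}" using L by simp
    from hi[OF that this] show ?thesis by (rule has_integral_integrable)
  qed
  show cont: "continuous_on {0..L} (g k)" if k: "k < 6" for k
  proof -
    have "continuous_on {0..L} (\<lambda>x. g k 0 + integral {0..x} (g (Suc k)))"
      by (intro continuous_intros indefinite_integral_continuous_1 int k)
    then show ?thesis by (rule continuous_on_eq) (rule eq[OF k, symmetric])
  qed
  show "(g k has_vector_derivative g (Suc k) x) (at x within {0..L})" if k: "k < 5" and x: "x \<in> {0..L}" for k x
  proof -
    have c: "continuous_on {0..L} (g (Suc k))" using cont k by simp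
    have "((\<lambda>u. g k 0 + integral {0..u} (g (Suc k))) has_vector_derivative (0 + g (Suc k) x)) (at x within {0..L})"
      by (intro has_vector_derivative_add has_vector_derivative_const integral_has_vector_derivative c x)
    then have d: "((\<lambda>u. g k 0 + integral {0..u} (g (Suc k))) has_vector_derivative g (Suc k) x) (at x within {0..L})"
      by simp
    have eqk: "g k y = g k 0 + integral {0..y} (g (Suc k))" if "y \<in> {0..L}" for y
      by (rule eq) (use k that in auto)
    show ?thesis by (rule has_vector_derivative_transform[OF x eqk d])
  qed
  show "g 0 x = u0 x" if "x \<in> {0..L}" for x using all that by simp
qed


lemma ibp_R1:
  fixes G0 G1 :: "real \<Rightarrow> real"
  assumes L: "0 < L" and c0: "continuous_on {0..L} G0" and c1: "continuous_on {0..L} G1"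
    and d: "\<And>x. x \<in> {0..L} \<Longrightarrow> (G0 has_vector_derivative G1 x) (at x within {0..L})"
  shows "integral {0..L} (\<lambda>x. G1 x * sin (real p * pi * x / L))
         = - (real p * pi / L) * integral {0..L} (\<lambda>x. G0 x * cos (real p * pi * x / L))"
proof -
  have dp: "((\<lambda>x. sin (real p * pi * x / L)) has_real_derivative (real p * pi / L) * cos (real p * pi * x / L)) (at x)" for x
    using L by (auto intro!: derivative_eq_intros simp: algebra_simps)
  have "integral {0..L} (\<lambda>x. G1 x * sin (real p * pi * x / L))
      = G0 L * sin (real p * pi * L / L) - G0 0 * sin (real p * pi * 0 / L)
        - integral {0..L} (\<lambda>x. G0 x * ((real p * pi / L) * cos (real p * pi * x / L)))"
    by (rule ibp_gen[OF _ c0 c1 d dp]) (use L in \<open>auto intro!: continuous_intros\<close>)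
  also have "sin (real p * pi * L / L) = 0" using L by simp
  also have "(\<lambda>x. G0 x * ((real p * pi / L) * cos (real p * pi * x / L))) = (\<lambda>x. (real p * pi / L) * (G0 x * cos (real p * pi * x / L)))"
    by (simp add: mult_ac)
  finally show ?thesis by simp
qed

lemma ibp_R2:
  fixes G0 G1 :: "real \<Rightarrow> real"
  assumes L: "0 < L" and c0: "continuous_on {0..L} G0" and c1: "continuous_on {0..L} G1"
    and d: "\<And>x. x \<in> {0..L} \<Longrightarrow> (G0 has_vector_derivative G1 x) (at x within {0..L})"
    and b0: "G0 0 = 0" and bL: "G0 L = 0"
  shows "integral {0..L} (\<lambda>x. G1 x * cos (real p * pi * x / L))
         = (real p * pi / L) * integral {0..L} (\<lambda>x. G0 x * sin (real p * pi * x / L))"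
proof -
  have dp: "((\<lambda>x. cos (real p * pi * x / L)) has_real_derivative - (real p * pi / L) * sin (real p * pi * x / L)) (at x)" for x
    using L by (auto intro!: derivative_eq_intros simp: algebra_simps)
  have "integral {0..L} (\<lambda>x. G1 x * cos (real p * pi * x / L))
      = G0 L * cos (real p * pi * L / L) - G0 0 * cos (real p * pi * 0 / L)
        - integral {0..L} (\<lambda>x. G0 x * (- (real p * pi / L) * sin (real p * pi * x / L)))"
    by (rule ibp_gen[OF _ c0 c1 d dp]) (use L in \<open>auto intro!: continuous_intros\<close>)
  also have "(\<lambda>x. G0 x * (- (real p * pi / L) * sin (real p * pi * x / L))) = (\<lambda>x. (- (real p * pi / L)) * (G0 x * sin (real p * pi * x / L)))"
    by (simp add: mult_ac)
  finally show ?thesis using b0 bL by simp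
qed

lemma alpha_Is5:
  assumes L: "0 < L" and H: "H6_derivs L u0 g" and b: "g 1 0 = 0" "g 1 L = 0" "g 3 0 = 0" "g 3 L = 0"
    and p: "0 < p"
  shows "\<bar>alpha L u0 p\<bar> * real p ^ 4 = (sqrt 2 * L ^ 4 / pi ^ 5) * (\<bar>integral {0..L} (\<lambda>x. g 5 x * sin (real p * pi * x / L))\<bar> / real p)"
proof -
  note cont = H6_facts(1)[OF L H] and der = H6_facts(2)[OF L H] and g0 = H6_facts(3)[OF L H]
  define w where "w = real p * pi / L"
  define Ic where "Ic k = integral {0..L} (\<lambda>x. g k x * cos (real p * pi * x / L))" for k
  define Is where "Is k = integral {0..L} (\<lambda>x. g k x * sin (real p * pi * x / L))" for k
  have R1: "Is (Suc k) = - w * Ic k" if "k < 5" for k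
    unfolding Is_def Ic_def w_def
    by (rule ibp_R1[OF L cont cont der]) (use that in auto)
  have R2: "Ic (Suc k) = w * Is k" if "k < 5" "g k 0 = 0" "g k L = 0" for k
    unfolding Is_def Ic_def w_def
    by (rule ibp_R2[OF L cont cont der]) (use that in auto)
  have e1: "Is 1 = - w * Ic 0" using R1[of 0] by simp
  have e2: "Ic 2 = w * Is 1" using R2[of 1] b by (simp add: numeral_2_eq_2)
  have e3: "Is 3 = - w * Ic 2" using R1[of 2] by (simp add: numeral_3_eq_3 numeral_2_eq_2)
  have e4: "Ic 4 = w * Is 3" using R2[of 3] b by (simp add: eval_nat_numeral)
  have e5: "Is 5 = - w * Ic 4" using R1[of 4] by (simp add: eval_nat_numeral)
  have chain: "Is 5 = - (w ^ 5 * Ic 0)"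
    unfolding e5 e4 e3 e2 e1 by (simp add: power_def algebra_simps)
  have w0: "0 < w" unfolding w_def using L p by simp
  have al: "alpha L u0 p = sqrt 2 / L * Ic 0"
  proof -
    have "integral {0..L} (\<lambda>x. u0 x * cfun L p x) = integral {0..L} (\<lambda>x. sqrt 2 * (g 0 x * cos (real p * pi * x / L)))"
      by (rule integral_cong) (use p g0 in \<open>simp add: cfun_def\<close>)
    then show ?thesis unfolding alpha_def Ic_def by simp
  qed
  have "\<bar>alpha L u0 p\<bar> * real p ^ 4 = sqrt 2 / L * \<bar>Ic 0\<bar> * real p ^ 4"
    unfolding al using L by (simp add: abs_mult)
  also have "\<bar>Ic 0\<bar> = \<bar>Is 5\<bar> / w ^ 5" using chain w0 by (simp add: abs_mult)
  also have "sqrt 2 / L * (\<bar>Is 5\<bar> / w ^ 5) * real p ^ 4 = (sqrt 2 * L ^ 4 / pi ^ 5) * (\<bar>Is 5\<bar> / real p)"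
  proof -
    have p5: "x ^ 5 = x * x ^ 4" for x :: real using power_Suc[of x 4] by simp
    show ?thesis unfolding w_def using L p by (simp add: field_simps power_divide power_mult_distrib p5)
  qed
  finally show ?thesis unfolding Is_def .
qed

lemma alpha_summable:
  assumes L: "0 < L" and adm: "admissible_data L u0"
  shows "summable (\<lambda>p. \<bar>alpha L u0 p\<bar> * real p ^ 4)"
proof -
  obtain g where H: "H6_derivs L u0 g" and b: "g 1 0 = 0" "g 1 L = 0" "g 3 0 = 0" "g 3 L = 0"
    using adm unfolding admissible_data_def by blast
  have c5: "continuous_on {0..L} (g 5)" using H6_facts(1)[OF L H, of 5] by simp
  define beta where "beta p = integral {0..L} (\<lambda>x. g 5 x * sin (real p * pi * x / L))" for p
  define B where "B = L / 2 * integral {0..L} (\<lambda>x. (g 5 x)\<^sup>2)"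
  define K where "K = sqrt 2 * L ^ 4 / pi ^ 5"
  have K0: "0 \<le> K" unfolding K_def using L by simp
  have bes: "(\<Sum>p\<in>{1..N}. (beta p)\<^sup>2) \<le> B" for N
    unfolding beta_def B_def by (rule bessel_sin[OF L c5])
  have beta0: "beta 0 = 0" unfolding beta_def by simp
  have sb: "summable (\<lambda>p. (beta p)\<^sup>2)"
  proof (rule bounded_imp_summable)
    fix n
    have "{..n} = insert 0 {1..(n::nat)}" by auto
    then have "(\<Sum>p\<le>n. (beta p)\<^sup>2) = (beta 0)\<^sup>2 + (\<Sum>p\<in>{1..n}. (beta p)\<^sup>2)" by simp
    then show "(\<Sum>p\<le>n. (beta p)\<^sup>2) \<le> B" using bes[of n] beta0 by simp
  qed simp
  have si: "summable (\<lambda>p. inverse (real p ^ 2))" using inverse_power_summable[of 2] by simp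
  have s: "summable (\<lambda>p. K / 2 * ((beta p)\<^sup>2 + inverse (real p ^ 2)))"
    by (intro summable_mult summable_add sb si)
  show ?thesis
  proof (rule summable_comparison_test'[OF s])
    fix p :: nat
    show "norm (\<bar>alpha L u0 p\<bar> * real p ^ 4) \<le> K / 2 * ((beta p)\<^sup>2 + inverse (real p ^ 2))"
    proof (cases "p = 0")
      case True
      then show ?thesis using K0 by simp
    next
      case False
      then have pp: "0 < real p" by simp
      have e: "\<bar>alpha L u0 p\<bar> * real p ^ 4 = K * (\<bar>beta p\<bar> / real p)"
        unfolding K_def beta_def using alpha_Is5[OF L H b] False by simp
      have "0 \<le> (\<bar>beta p\<bar> - inverse (real p))\<^sup>2" by simp
      then have "2 * (\<bar>beta p\<bar> / real p) \<le> (beta p)\<^sup>2 + inverse (real p ^ 2)"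
        using pp by (simp add: power2_diff divide_inverse power_inverse mult_ac)
      then have "\<bar>beta p\<bar> / real p \<le> ((beta p)\<^sup>2 + inverse (real p ^ 2)) / 2" by (simp only: le_divide_eq_numeral1(1) mult.commute)
      then have "K * (\<bar>beta p\<bar> / real p) \<le> K * (((beta p)\<^sup>2 + inverse (real p ^ 2)) / 2)"
        using K0 by (rule mult_left_mono)
      moreover have "K * (((beta p)\<^sup>2 + inverse (real p ^ 2)) / 2) = K / 2 * ((beta p)\<^sup>2 + inverse (real p ^ 2))" by simp
      moreover have "norm (\<bar>alpha L u0 p\<bar> * real p ^ 4) = \<bar>alpha L u0 p\<bar> * real p ^ 4" by simp
      ultimately show ?thesis using e by linarith
    qed
  qed
qed


lemma l2norm_sums_le:
  assumes f: "\<And>j. (\<lambda>p. f p j) sums F j" and b: "\<And>p. l2norm J (f p) \<le> b p" and sb: "summable b"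
  shows "l2norm J F \<le> suminf b"
proof -
  have lim: "(\<lambda>N. l2norm J (\<lambda>j. \<Sum>p<N. f p j)) \<longlonglongrightarrow> l2norm J F"
    unfolding l2norm_def using f[unfolded sums_def]
    by (intro tendsto_intros) auto
  have b0: "0 \<le> b p" for p using b[of p] l2norm_nonneg[of J "f p"] by linarith
  have le: "l2norm J (\<lambda>j. \<Sum>p<N. f p j) \<le> suminf b" for N
  proof -
    have "l2norm J (\<lambda>j. \<Sum>p<N. f p j) \<le> (\<Sum>p<N. l2norm J (f p))" by (rule l2norm_sum) simp
    also have "\<dots> \<le> (\<Sum>p<N. b p)" by (intro sum_mono b)
    also have "\<dots> \<le> suminf b" using sb b0 by (intro sum_le_suminf) auto
    finally show ?thesis .
  qed
  show ?thesis using lim le by (intro LIMSEQ_le_const2) auto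
qed

lemma Vmode_zero: "2 \<le> J \<Longrightarrow> j < J \<Longrightarrow> Vmode L J 0 j = 0"
  unfolding Vmode_def Pdelta_def Pi_grid_def cfun_def by auto

lemma Emode_zero:
  assumes J: "2 \<le> J"
  shows "l2norm J (Emode L J dt n 0) = 0"
proof -
  have z: "(scheme_op L J dt ^^ m) (\<lambda>i. Dk L 0 dt k * Vmode L J 0 i) j = 0" if j: "j < J" for m k j
  proof -
    have "(scheme_op L J dt ^^ m) (\<lambda>i. Dk L 0 dt k * Vmode L J 0 i) j = (scheme_op L J dt ^^ m) (\<lambda>i. 0 * Vmode L J 0 i) j"
      by (rule iter_local[OF _ j]) (use Vmode_zero[OF J] in simp)
    also have "\<dots> = 0"
      using iter_scale[where L=L and J=J and dt=dt and m=m and a=0 and v="Vmode L J 0"] by (simp add: fun_eq_iff)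
    finally show ?thesis .
  qed
  have "l2norm J (Emode L J dt n 0) = l2norm J (\<lambda>j. 0 * 0)"
    by (rule l2norm_cong) (simp add: Emode_def z)
  also have "\<dots> = 0" using l2norm_scale[of J 0 "\<lambda>j. 0"] by simp
  finally show ?thesis .
qed

theorem proposition3p7:
  fixes L :: real
  assumes "L > 0"
  shows "\<exists>C>0. \<forall>(u0::real \<Rightarrow> real) (dt::real) (J::nat) (n::nat).
     admissible_data L u0 \<and> 0 < dt \<and> dt < 1 \<and> J \<ge> 2 \<and> dt / (dx L J)\<^sup>2 \<le> 1 / 2 \<and> n \<ge> 1
     \<longrightarrow> l2norm J (\<lambda>j. dt * (\<Sum>k<n. (scheme_op L J dt ^^ (n - 1 - k))
                                 (Ldelta L J (sol L u0 (real k * dt))) j))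
         \<le> C * dx L J * (\<Sum>p. \<bar>alpha L u0 (Suc p)\<bar> * real (Suc p) ^ 4)"
proof (intro exI[of _ "Kc L"] conjI allI impI)
  show "0 < Kc L" using assms by (rule Kc_pos)
  fix u0 :: "real \<Rightarrow> real" and dt :: real and J n :: nat
  assume H: "admissible_data L u0 \<and> 0 < dt \<and> dt < 1 \<and> J \<ge> 2 \<and> dt / (dx L J)\<^sup>2 \<le> 1 / 2 \<and> n \<ge> 1"
  then have adm: "admissible_data L u0" and dt: "0 < dt" "dt < 1" and J: "2 \<le> J"
    and r: "dt / (dx L J)\<^sup>2 \<le> 1 / 2" and n: "1 \<le> n" by auto
  note L = assms
  have s: "summable (\<lambda>p. \<bar>alpha L u0 p\<bar> * real p ^ 4)" by (rule alpha_summable[OF L adm])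
  define LHS where "LHS = (\<lambda>j. dt * (\<Sum>k<n. (scheme_op L J dt ^^ (n - 1 - k)) (Ldelta L J (sol L u0 (real k * dt))) j))"
  have sums: "(\<lambda>p. alpha L u0 p * Emode L J dt n p j) sums LHS j" for j
  proof -
    have sk: "(\<lambda>p. alpha L u0 p * (scheme_op L J dt ^^ (n - 1 - k)) (\<lambda>i. Dk L p dt k * Vmode L J p i) j)
          sums (scheme_op L J dt ^^ (n - 1 - k)) (Ldelta L J (sol L u0 (real k * dt))) j" for k
    proof -
      have t0: "0 \<le> real k * dt" using dt by simp
      have a: "\<And>i. (\<lambda>p. alpha L u0 p * Dk L p dt k * Vmode L J p i) sums Ldelta L J (sol L u0 (real k * dt)) i"
        unfolding Dk_def by (rule Ldelta_sums[OF L t0 s])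
      have "(\<lambda>p. (scheme_op L J dt ^^ (n - 1 - k)) (\<lambda>i. alpha L u0 p * Dk L p dt k * Vmode L J p i) j)
            sums (scheme_op L J dt ^^ (n - 1 - k)) (Ldelta L J (sol L u0 (real k * dt))) j"
        by (rule iter_sums) (rule a)
      moreover have "(scheme_op L J dt ^^ (n - 1 - k)) (\<lambda>i. alpha L u0 p * Dk L p dt k * Vmode L J p i) j
          = alpha L u0 p * (scheme_op L J dt ^^ (n - 1 - k)) (\<lambda>i. Dk L p dt k * Vmode L J p i) j" for p
        using iter_scale[where L=L and J=J and dt=dt and m="n - 1 - k" and a="alpha L u0 p" and v="\<lambda>i. Dk L p dt k * Vmode L J p i"]
        by (simp add: mult.assoc)
      ultimately show ?thesis by simp
    qed
    have "(\<lambda>p. \<Sum>k<n. alpha L u0 p * (scheme_op L J dt ^^ (n - 1 - k)) (\<lambda>i. Dk L p dt k * Vmode L J p i) j)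
          sums (\<Sum>k<n. (scheme_op L J dt ^^ (n - 1 - k)) (Ldelta L J (sol L u0 (real k * dt))) j)"
      by (rule sums_sum) (rule sk)
    then have "(\<lambda>p. dt * (\<Sum>k<n. alpha L u0 p * (scheme_op L J dt ^^ (n - 1 - k)) (\<lambda>i. Dk L p dt k * Vmode L J p i) j))
          sums (dt * (\<Sum>k<n. (scheme_op L J dt ^^ (n - 1 - k)) (Ldelta L J (sol L u0 (real k * dt))) j))"
      by (rule sums_mult)
    moreover have "dt * (\<Sum>k<n. alpha L u0 p * (scheme_op L J dt ^^ (n - 1 - k)) (\<lambda>i. Dk L p dt k * Vmode L J p i) j)
        = alpha L u0 p * Emode L J dt n p j" for p
      unfolding Emode_def by (simp add: sum_distrib_left[symmetric] mult_ac)
    ultimately show ?thesis unfolding LHS_def by simp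
  qed
  define b where "b p = \<bar>alpha L u0 p\<bar> * real p ^ 4 * (Kc L * dx L J)" for p
  have bnd: "l2norm J (\<lambda>j. alpha L u0 p * Emode L J dt n p j) \<le> b p" for p
  proof (cases "p = 0")
    case True
    then show ?thesis unfolding b_def l2norm_scale using Emode_zero[OF J] by simp
  next
    case False
    have "l2norm J (Emode L J dt n p) \<le> Kc L * real p ^ 4 * dx L J"
      using Emode_bound[OF L J dt r _ n] False by simp
    then have "\<bar>alpha L u0 p\<bar> * l2norm J (Emode L J dt n p) \<le> \<bar>alpha L u0 p\<bar> * (Kc L * real p ^ 4 * dx L J)"
      by (intro mult_left_mono) auto
    then show ?thesis unfolding b_def l2norm_scale by (simp add: mult_ac)
  qed
  have sb: "summable b" unfolding b_def by (rule summable_mult2[OF s])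
  have "l2norm J LHS \<le> suminf b" by (rule l2norm_sums_le[OF sums bnd sb])
  also have "suminf b = (\<Sum>p. \<bar>alpha L u0 p\<bar> * real p ^ 4) * (Kc L * dx L J)"
    unfolding b_def by (rule suminf_mult2[OF s, symmetric])
  also have "(\<Sum>p. \<bar>alpha L u0 p\<bar> * real p ^ 4) = (\<Sum>p. \<bar>alpha L u0 (Suc p)\<bar> * real (Suc p) ^ 4)"
    using suminf_split_head[OF s] by simp
  finally show "l2norm J LHS \<le> Kc L * dx L J * (\<Sum>p. \<bar>alpha L u0 (Suc p)\<bar> * real (Suc p) ^ 4)"
    by (simp add: mult_ac)
qed


end
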